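(* Let $(R,\mathfrak m)$ be a Noetherian local ring, $J$ an $\mathfrak m$-primary ideal, and $I=(f_1,\dots,f_r)$ where $f_1,\dots,f_r$ is a filter-regular sequence. Let $p$ be the Hilbert perturbation index of $R/I$ with respect to $J$, and $N=\max\{p,\operatorname{ar}_J(I)+1\}$. Then $\operatorname{gr}_J(R/I)\cong\operatorname{gr}_J(R/I')$ for all ideals $I'=(f_1',\dots,f_r')$ with $f_i'-f_i\in J^N$, $i=1,\dots,r$.
   Context: A sequence is filter-regular if for each $i$, $f_i\notin\mathfrak p$ for every associated prime $\mathfrak p\ne\mathfrak m$ of $R/(f_1,\dots,f_{i-1})$. The Hilbert perturbation index of $R/I$ with respect to $J$ is the least number $p$ such that for every $f_1',\dots,f_r'$ with $f_i'\equiv f_i\bmod J^p$ and $I'=(f_1',\dots,f_r')$, one has $\ell(R/(I+J^n))=\ell(R/(I'+J^n))$ for all $n\ge0$. $\operatorname{ar}_J(I)$ is the least $c$ with $J^n\cap I=J^{n-c}(J^c\cap I)$ for all $n\ge c$. $\operatorname{gr}_J(R/I)=\bigoplus_n(J^n+I)/(J^{n+1}+I)$. *)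

theory Defs
  imports Main "HOL-Library.Extended_Nat"
begin

definition is_ideal :: "'a::comm_ring_1 set \<Rightarrow> bool" where
  "is_ideal I \<longleftrightarrow> 0 \<in> I \<and> (\<forall>x\<in>I. \<forall>y\<in>I. x + y \<in> I) \<and> (\<forall>r. \<forall>x\<in>I. r * x \<in> I)"

definition ideal_gen :: "'a::comm_ring_1 set \<Rightarrow> 'a set" where
  "ideal_gen S = \<Inter>{I. is_ideal I \<and> S \<subseteq> I}"

definition ideal_of_list :: "'a::comm_ring_1 list \<Rightarrow> 'a set" where
  "ideal_of_list fs = ideal_gen (set fs)"

definition ideal_sum :: "'a::comm_ring_1 set \<Rightarrow> 'a set \<Rightarrow> 'a set" where
  "ideal_sum A B = {a + b | a b. a \<in> A \<and> b \<in> B}"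

definition ideal_prod :: "'a::comm_ring_1 set \<Rightarrow> 'a set \<Rightarrow> 'a set" where
  "ideal_prod A B = ideal_gen {a * b | a b. a \<in> A \<and> b \<in> B}"

primrec ideal_pow :: "'a::comm_ring_1 set \<Rightarrow> nat \<Rightarrow> 'a set" where
  "ideal_pow J 0 = UNIV"
| "ideal_pow J (Suc n) = ideal_prod J (ideal_pow J n)"

definition prime_ideal :: "'a::comm_ring_1 set \<Rightarrow> bool" where
  "prime_ideal P \<longleftrightarrow> is_ideal P \<and> P \<noteq> UNIV \<and> (\<forall>a b. a * b \<in> P \<longrightarrow> a \<in> P \<or> b \<in> P)"

definition maximal_ideal :: "'a::comm_ring_1 set \<Rightarrow> bool" where
  "maximal_ideal M \<longleftrightarrow> is_ideal M \<and> M \<noteq> UNIV \<and>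
     (\<forall>I. is_ideal I \<and> M \<subseteq> I \<longrightarrow> I = M \<or> I = UNIV)"

definition noetherian_ring :: "'a::comm_ring_1 itself \<Rightarrow> bool" where
  "noetherian_ring _ \<longleftrightarrow> (\<forall>I::'a set. is_ideal I \<longrightarrow> (\<exists>S. finite S \<and> I = ideal_gen S))"

definition local_ring_max :: "'a::comm_ring_1 set \<Rightarrow> bool" where
  "local_ring_max m \<longleftrightarrow> maximal_ideal m \<and> (\<forall>M. maximal_ideal M \<longrightarrow> M = m)"

definition ideal_radical :: "'a::comm_ring_1 set \<Rightarrow> 'a set" where
  "ideal_radical I = {x. \<exists>n. x ^ n \<in> I}"

definition primary_ideal :: "'a::comm_ring_1 set \<Rightarrow> bool" where
  "primary_ideal Q \<longleftrightarrow> is_ideal Q \<and> Q \<noteq> UNIV \<and>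
     (\<forall>a b. a * b \<in> Q \<and> a \<notin> Q \<longrightarrow> (\<exists>n. b ^ n \<in> Q))"

definition m_primary :: "'a::comm_ring_1 set \<Rightarrow> 'a set \<Rightarrow> bool" where
  "m_primary m Q \<longleftrightarrow> primary_ideal Q \<and> ideal_radical Q = m"

definition ideal_colon :: "'a::comm_ring_1 set \<Rightarrow> 'a \<Rightarrow> 'a set" where
  "ideal_colon K x = {r. r * x \<in> K}"

definition assoc_primes :: "'a::comm_ring_1 set \<Rightarrow> 'a set set" where
  "assoc_primes K = {P. prime_ideal P \<and> (\<exists>x. P = ideal_colon K x)}"

(* f_1,...,f_r (here the list fs, 0-indexed) is filter-regular w.r.t. the maximal ideal m *)
definition filter_regular :: "'a::comm_ring_1 set \<Rightarrow> 'a list \<Rightarrow> bool" where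
  "filter_regular m fs \<longleftrightarrow>
     (\<forall>i < length fs. \<forall>P \<in> assoc_primes (ideal_of_list (take i fs)).
        P \<noteq> m \<longrightarrow> fs ! i \<notin> P)"

(* length of the R-module R/K: supremum of lengths n of strict chains of ideals
   K = I_0 \<subset> I_1 \<subset> ... \<subset> I_n = R  (submodules of R/K correspond to ideals containing K) *)
definition quot_length :: "'a::comm_ring_1 set \<Rightarrow> enat" where
  "quot_length K = Sup {enat n | n. \<exists>C :: nat \<Rightarrow> 'a set.
       C 0 = K \<and> C n = UNIV \<and> (\<forall>i\<le>n. is_ideal (C i)) \<and> (\<forall>i<n. C i \<subset> C (Suc i))}"

definition perturbation :: "'a::comm_ring_1 set \<Rightarrow> 'a list \<Rightarrow> 'a list \<Rightarrow> bool" where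
  "perturbation Q fs fs' \<longleftrightarrow> length fs' = length fs \<and> (\<forall>i < length fs. fs' ! i - fs ! i \<in> Q)"

definition hpi_property :: "'a::comm_ring_1 set \<Rightarrow> 'a list \<Rightarrow> nat \<Rightarrow> bool" where
  "hpi_property J fs p \<longleftrightarrow> (\<forall>fs'. perturbation (ideal_pow J p) fs fs' \<longrightarrow>
      (\<forall>n. quot_length (ideal_sum (ideal_of_list fs) (ideal_pow J n))
           = quot_length (ideal_sum (ideal_of_list fs') (ideal_pow J n))))"

definition hilbert_perturbation_index :: "'a::comm_ring_1 set \<Rightarrow> 'a list \<Rightarrow> nat \<Rightarrow> bool" where
  "hilbert_perturbation_index J fs p \<longleftrightarrow> hpi_property J fs p \<and> (\<forall>q. hpi_property J fs q \<longrightarrow> p \<le> q)"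

definition artin_rees_number :: "'a::comm_ring_1 set \<Rightarrow> 'a set \<Rightarrow> nat" where
  "artin_rees_number J I = (LEAST c. \<forall>n\<ge>c.
      ideal_pow J n \<inter> I = ideal_prod (ideal_pow J (n - c)) (ideal_pow J c \<inter> I))"

definition coset :: "'a::comm_ring_1 \<Rightarrow> 'a set \<Rightarrow> 'a set" where
  "coset x K = {x + y | y. y \<in> K}"

(* degree-n component of gr_J(R/I) = (J^n + I)/(J^(n+1) + I), as a set of cosets *)
definition gr_class :: "'a::comm_ring_1 set \<Rightarrow> 'a set \<Rightarrow> nat \<Rightarrow> 'a \<Rightarrow> 'a set" where
  "gr_class J I n x = coset x (ideal_sum (ideal_pow J (Suc n)) I)"

definition gr_comp :: "'a::comm_ring_1 set \<Rightarrow> 'a set \<Rightarrow> nat \<Rightarrow> 'a set set" where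
  "gr_comp J I n = gr_class J I n ` ideal_sum (ideal_pow J n) I"

(* isomorphism of graded rings gr_J(R/I) \<cong> gr_J(R/I'): a family of degree-wise bijections
   that is additive in each degree, multiplicative across degrees and preserves 1 *)
definition gr_iso :: "'a::comm_ring_1 set \<Rightarrow> 'a set \<Rightarrow> 'a set \<Rightarrow> bool" where
  "gr_iso J I I' \<longleftrightarrow> (\<exists>\<phi> :: nat \<Rightarrow> 'a set \<Rightarrow> 'a set.
     (\<forall>n. bij_betw (\<phi> n) (gr_comp J I n) (gr_comp J I' n)) \<and>
     (\<forall>n x y x' y'. x \<in> ideal_sum (ideal_pow J n) I \<and> y \<in> ideal_sum (ideal_pow J n) I \<and>
         x' \<in> ideal_sum (ideal_pow J n) I' \<and> y' \<in> ideal_sum (ideal_pow J n) I' \<and>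
         \<phi> n (gr_class J I n x) = gr_class J I' n x' \<and> \<phi> n (gr_class J I n y) = gr_class J I' n y'
       \<longrightarrow> \<phi> n (gr_class J I n (x + y)) = gr_class J I' n (x' + y')) \<and>
     (\<forall>m n x y x' y'. x \<in> ideal_sum (ideal_pow J m) I \<and> y \<in> ideal_sum (ideal_pow J n) I \<and>
         x' \<in> ideal_sum (ideal_pow J m) I' \<and> y' \<in> ideal_sum (ideal_pow J n) I' \<and>
         \<phi> m (gr_class J I m x) = gr_class J I' m x' \<and> \<phi> n (gr_class J I n y) = gr_class J I' n y'
       \<longrightarrow> \<phi> (m + n) (gr_class J I (m + n) (x * y)) = gr_class J I' (m + n) (x' * y')) \<and>
     \<phi> 0 (gr_class J I 0 1) = gr_class J I' 0 1)"

end

theory Submission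
  imports Defs "HOL-Computational_Algebra.Polynomial"
begin


lemma is_idealI:
  assumes "0 \<in> I" "\<And>x y. x \<in> I \<Longrightarrow> y \<in> I \<Longrightarrow> x + y \<in> I" "\<And>r x. x \<in> I \<Longrightarrow> r * x \<in> I"
  shows "is_ideal I"
  using assms unfolding is_ideal_def by blast

lemma ideal_0: "is_ideal I \<Longrightarrow> 0 \<in> I" unfolding is_ideal_def by blast
lemma ideal_add: "is_ideal I \<Longrightarrow> x \<in> I \<Longrightarrow> y \<in> I \<Longrightarrow> x + y \<in> I" unfolding is_ideal_def by blast
lemma ideal_mult: "is_ideal I \<Longrightarrow> x \<in> I \<Longrightarrow> r * x \<in> I" unfolding is_ideal_def by blast
lemma ideal_mult2: "is_ideal I \<Longrightarrow> x \<in> I \<Longrightarrow> x * r \<in> I" using ideal_mult[of I x r] by (simp add: mult.commute)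
lemma ideal_uminus: "is_ideal I \<Longrightarrow> x \<in> I \<Longrightarrow> - x \<in> I"
  using ideal_mult[of I x "-1"] by simp
lemma ideal_diff: "is_ideal I \<Longrightarrow> x \<in> I \<Longrightarrow> y \<in> I \<Longrightarrow> x - y \<in> I"
  using ideal_add[of I x "-y"] ideal_uminus[of I y] by simp
lemma ideal_sum_mem: "is_ideal I \<Longrightarrow> (\<And>i. i \<in> A \<Longrightarrow> f i \<in> I) \<Longrightarrow> sum f A \<in> I"
  by (induction A rule: infinite_finite_induct) (auto intro: ideal_0 ideal_add)
lemma ideal_UNIV: "is_ideal UNIV" by (rule is_idealI) auto
lemma ideal_Int: "is_ideal I \<Longrightarrow> is_ideal K \<Longrightarrow> is_ideal (I \<inter> K)"
  unfolding is_ideal_def by blast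
lemma ideal_one: "is_ideal I \<Longrightarrow> 1 \<in> I \<Longrightarrow> I = UNIV"
  using ideal_mult[of I 1] by force

lemma ideal_gen_ideal: "is_ideal (ideal_gen S)"
  unfolding ideal_gen_def is_ideal_def by blast
lemma ideal_gen_sub: "S \<subseteq> ideal_gen S"
  unfolding ideal_gen_def by blast
lemma ideal_gen_least: "is_ideal I \<Longrightarrow> S \<subseteq> I \<Longrightarrow> ideal_gen S \<subseteq> I"
  unfolding ideal_gen_def by blast
lemma ideal_gen_mono: "S \<subseteq> T \<Longrightarrow> ideal_gen S \<subseteq> ideal_gen T"
  unfolding ideal_gen_def by blast
lemma ideal_gen_idem: "is_ideal I \<Longrightarrow> ideal_gen I = I"
  using ideal_gen_least ideal_gen_sub by blast

lemma ideal_colon_ideal: "is_ideal K \<Longrightarrow> is_ideal (ideal_colon K x)"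
  unfolding ideal_colon_def is_ideal_def by (auto simp: distrib_right mult.assoc)

lemma ideal_sum_ideal: "is_ideal A \<Longrightarrow> is_ideal B \<Longrightarrow> is_ideal (ideal_sum A B)"
  unfolding ideal_sum_def
proof (rule is_idealI)
  assume a: "is_ideal A" "is_ideal B"
  show "0 \<in> {a + b |a b. a \<in> A \<and> b \<in> B}" using ideal_0[OF a(1)] ideal_0[OF a(2)] by force
  fix x y assume "x \<in> {a + b |a b. a \<in> A \<and> b \<in> B}" "y \<in> {a + b |a b. a \<in> A \<and> b \<in> B}"
  then obtain a1 b1 a2 b2 where "x = a1 + b1" "y = a2 + b2" "a1 \<in> A" "a2 \<in> A" "b1 \<in> B" "b2 \<in> B" by blast
  then have "x + y = (a1 + a2) + (b1 + b2)" "a1 + a2 \<in> A" "b1 + b2 \<in> B"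
    using a by (auto intro: ideal_add simp: algebra_simps)
  then show "x + y \<in> {a + b |a b. a \<in> A \<and> b \<in> B}" by blast
next
  assume a: "is_ideal A" "is_ideal B"
  fix r x assume "x \<in> {a + b |a b. a \<in> A \<and> b \<in> B}"
  then obtain a1 b1 where "x = a1 + b1" "a1 \<in> A" "b1 \<in> B" by blast
  then have "r * x = r * a1 + r * b1" "r * a1 \<in> A" "r * b1 \<in> B"
    using a by (auto intro: ideal_mult simp: distrib_left)
  then show "r * x \<in> {a + b |a b. a \<in> A \<and> b \<in> B}" by blast
qed

lemma ideal_sum_memI: "a \<in> A \<Longrightarrow> b \<in> B \<Longrightarrow> a + b \<in> ideal_sum A B"
  unfolding ideal_sum_def by blast
lemma ideal_sum_memE: "x \<in> ideal_sum A B \<Longrightarrow> (\<And>a b. a \<in> A \<Longrightarrow> b \<in> B \<Longrightarrow> x = a + b \<Longrightarrow> P) \<Longrightarrow> P"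
  unfolding ideal_sum_def by blast
lemma ideal_sum_comm_sub: "ideal_sum A B \<subseteq> ideal_sum B A"
proof
  fix x assume "x \<in> ideal_sum A B"
  then obtain a b where "a \<in> A" "b \<in> B" "x = a + b" unfolding ideal_sum_def by blast
  then have "x = b + a" "b \<in> B" "a \<in> A" by (simp_all add: add.commute)
  then show "x \<in> ideal_sum B A" unfolding ideal_sum_def by blast
qed
lemma ideal_sum_comm: "ideal_sum A B = ideal_sum B A"
  using ideal_sum_comm_sub by blast

lemma ideal_sum_left: "is_ideal B \<Longrightarrow> A \<subseteq> ideal_sum A B"
proof
  fix x assume "is_ideal B" "x \<in> A"
  then show "x \<in> ideal_sum A B" using ideal_sum_memI[of x A 0 B] ideal_0 by auto
qed
lemma ideal_sum_right: "is_ideal A \<Longrightarrow> B \<subseteq> ideal_sum A B"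
proof
  fix x assume "is_ideal A" "x \<in> B"
  then show "x \<in> ideal_sum A B" using ideal_sum_memI[of 0 A x B] ideal_0 by auto
qed
lemma ideal_sum_least: "is_ideal C \<Longrightarrow> A \<subseteq> C \<Longrightarrow> B \<subseteq> C \<Longrightarrow> ideal_sum A B \<subseteq> C"
  unfolding ideal_sum_def using ideal_add by blast
lemma ideal_sum_mono: "A \<subseteq> A' \<Longrightarrow> B \<subseteq> B' \<Longrightarrow> ideal_sum A B \<subseteq> ideal_sum A' B'"
  unfolding ideal_sum_def by blast

lemma ideal_prod_ideal: "is_ideal (ideal_prod A B)"
  unfolding ideal_prod_def by (rule ideal_gen_ideal)
lemma ideal_prod_memI: "a \<in> A \<Longrightarrow> b \<in> B \<Longrightarrow> a * b \<in> ideal_prod A B"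
proof -
  assume "a \<in> A" "b \<in> B"
  then have "a * b \<in> {a * b |a b. a \<in> A \<and> b \<in> B}" by blast
  then show ?thesis unfolding ideal_prod_def by (rule subsetD[OF ideal_gen_sub])
qed
lemma ideal_prod_least: "is_ideal L \<Longrightarrow> (\<And>a b. a \<in> A \<Longrightarrow> b \<in> B \<Longrightarrow> a * b \<in> L) \<Longrightarrow> ideal_prod A B \<subseteq> L"
  unfolding ideal_prod_def by (rule ideal_gen_least) blast+

lemma ideal_pow_ideal: "is_ideal (ideal_pow J n)"
  by (cases n) (auto simp: ideal_UNIV ideal_prod_ideal)

lemma ideal_pow_1: "is_ideal J \<Longrightarrow> ideal_pow J 1 = J"
proof
  assume J: "is_ideal J"
  show "ideal_pow J 1 \<subseteq> J" by (simp, rule ideal_prod_least[OF J]) (simp add: J ideal_mult2)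
  show "J \<subseteq> ideal_pow J 1" using ideal_prod_memI[of _ J 1 UNIV] by force
qed

lemma ideal_pow_mult: "is_ideal J \<Longrightarrow> u \<in> ideal_pow J a \<Longrightarrow> v \<in> ideal_pow J b \<Longrightarrow> u * v \<in> ideal_pow J (a + b)"
proof (induction a arbitrary: u v)
  case 0
  then show ?case by (simp add: ideal_mult ideal_pow_ideal)
next
  case (Suc a)
  let ?L = "ideal_colon (ideal_pow J (Suc a + b)) v"
  have "ideal_pow J (Suc a) \<subseteq> ?L"
    unfolding ideal_pow.simps
  proof (rule ideal_prod_least)
    show "is_ideal ?L" by (rule ideal_colon_ideal[OF ideal_pow_ideal])
    fix x y assume "x \<in> J" "y \<in> ideal_pow J a"
    then have "y * v \<in> ideal_pow J (a + b)" using Suc by blast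
    then have "x * (y * v) \<in> ideal_pow J (Suc a + b)" using \<open>x \<in> J\<close> ideal_prod_memI by auto
    then show "x * y \<in> ?L" unfolding ideal_colon_def by (simp add: mult.assoc)
  qed
  then show ?case using Suc.prems unfolding ideal_colon_def by blast
qed

lemma ideal_pow_split:
  assumes "is_ideal L" "\<And>u v. u \<in> ideal_pow J a \<Longrightarrow> v \<in> ideal_pow J b \<Longrightarrow> u * v \<in> L"
  shows "ideal_pow J (a + b) \<subseteq> L"
  using assms
proof (induction a arbitrary: L)
  case 0
  then show ?case using 0(2)[of 1] by auto
next
  case (Suc a)
  show ?case unfolding add_Suc ideal_pow.simps
  proof (rule ideal_prod_least[OF Suc.prems(1)])
    fix x w assume x: "x \<in> J" and w: "w \<in> ideal_pow J (a + b)"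
    have "ideal_pow J (a + b) \<subseteq> ideal_colon L x"
    proof (rule Suc.IH)
      show "is_ideal (ideal_colon L x)" by (rule ideal_colon_ideal[OF Suc.prems(1)])
      fix u v assume "u \<in> ideal_pow J a" "v \<in> ideal_pow J b"
      then have "x * u \<in> ideal_pow J (Suc a)" using x ideal_prod_memI by auto
      then have "(x * u) * v \<in> L" using Suc.prems(2) \<open>v \<in> _\<close> by blast
      then show "u * v \<in> ideal_colon L x" unfolding ideal_colon_def by (simp add: ac_simps)
    qed
    then have "w * x \<in> L" using w unfolding ideal_colon_def by blast
    then show "x * w \<in> L" by (simp add: mult.commute)
  qed
qed

lemma ideal_pow_Suc_sub: "is_ideal J \<Longrightarrow> ideal_pow J (Suc n) \<subseteq> ideal_pow J n"
  by (simp, rule ideal_prod_least[OF ideal_pow_ideal]) (simp add: ideal_mult ideal_pow_ideal)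

lemma ideal_pow_anti: "is_ideal J \<Longrightarrow> m \<le> n \<Longrightarrow> ideal_pow J n \<subseteq> ideal_pow J m"
proof (induction n)
  case 0 then show ?case by simp
next
  case (Suc n)
  show ?case
  proof (cases "m = Suc n")
    case False
    then have "m \<le> n" using Suc.prems by simp
    then show ?thesis using Suc.IH Suc.prems(1) ideal_pow_Suc_sub[of J n] by blast
  qed simp
qed

definition lspan :: "'a::comm_ring_1 list \<Rightarrow> 'a set" where
  "lspan xs = {\<Sum>i<length xs. c i * xs ! i | c. True}"

lemma ideal_gen_list: "ideal_gen (set xs) = lspan xs"
proof
  show "lspan xs \<subseteq> ideal_gen (set xs)"
  proof
    fix x assume "x \<in> lspan xs"
    then obtain c where x: "x = (\<Sum>i<length xs. c i * xs ! i)" unfolding lspan_def by blast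
    show "x \<in> ideal_gen (set xs)" unfolding x
      by (rule ideal_sum_mem[OF ideal_gen_ideal], rule ideal_mult[OF ideal_gen_ideal])
         (auto intro: ideal_gen_sub[THEN subsetD])
  qed
  have "is_ideal (lspan xs)"
    unfolding lspan_def
  proof (rule is_idealI)
    show "0 \<in> {\<Sum>i<length xs. c i * xs ! i |c. True}" by (auto intro!: exI[of _ "\<lambda>_. 0"])
    fix x y assume "x \<in> {\<Sum>i<length xs. c i * xs ! i |c. True}" "y \<in> {\<Sum>i<length xs. c i * xs ! i |c. True}"
    then obtain c d where "x = (\<Sum>i<length xs. c i * xs ! i)" "y = (\<Sum>i<length xs. d i * xs ! i)" by blast
    then show "x + y \<in> {\<Sum>i<length xs. c i * xs ! i |c. True}"
      by (auto intro!: exI[of _ "\<lambda>i. c i + d i"] simp: distrib_right sum.distrib)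
  next
    fix r x assume "x \<in> {\<Sum>i<length xs. c i * xs ! i |c. True}"
    then obtain c where "x = (\<Sum>i<length xs. c i * xs ! i)" by blast
    then show "r * x \<in> {\<Sum>i<length xs. c i * xs ! i |c. True}"
      by (auto intro!: exI[of _ "\<lambda>i. r * c i"] simp: sum_distrib_left mult.assoc)
  qed
  moreover have "set xs \<subseteq> lspan xs"
  proof
    fix x assume "x \<in> set xs"
    then obtain k where k: "k < length xs" "xs ! k = x" by (auto simp: in_set_conv_nth)
    have "(\<Sum>i<length xs. (if i = k then 1 else 0) * xs ! i) = (\<Sum>i<length xs. if i = k then xs ! k else 0)"
      by (rule sum.cong) auto
    also have "\<dots> = x" using k by simp
    finally have "(\<Sum>i<length xs. (if i = k then 1 else 0) * xs ! i) = x" .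
    then show "x \<in> lspan xs" unfolding lspan_def by (auto intro!: exI[of _ "\<lambda>i. if i = k then 1 else 0"])
  qed
  ultimately show "ideal_gen (set xs) \<subseteq> lspan xs" by (rule ideal_gen_least)
qed



definition chain_len :: "'a::comm_ring_1 set \<Rightarrow> 'a set \<Rightarrow> nat \<Rightarrow> bool" where
  "chain_len K L n \<longleftrightarrow> (\<exists>C :: nat \<Rightarrow> 'a set. C 0 = K \<and> C n = L \<and> (\<forall>i\<le>n. is_ideal (C i)) \<and> (\<forall>i<n. C i \<subset> C (Suc i)))"

lemma quot_length_chain: "quot_length K = Sup {enat n | n. chain_len K UNIV n}"
  unfolding quot_length_def chain_len_def by simp

lemma chain_refl: "is_ideal K \<Longrightarrow> chain_len K K 0"
  unfolding chain_len_def by (rule exI[of _ "\<lambda>_. K"]) simp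

lemma chain_props:
  assumes "chain_len K L n"
  shows "is_ideal K" "is_ideal L" "K \<subseteq> L" "n > 0 \<Longrightarrow> K \<subset> L"
proof -
  obtain C where C: "C 0 = K" "C n = L" "\<forall>i\<le>n. is_ideal (C i)" "\<forall>i<n. C i \<subset> C (Suc i)"
    using assms unfolding chain_len_def by blast
  show "is_ideal K" "is_ideal L" using C by auto
  have mono: "C 0 \<subseteq> C j \<and> (j > 0 \<longrightarrow> C 0 \<subset> C j)" if "j \<le> n" for j
    using that
  proof (induction j)
    case (Suc j)
    then show ?case using C(4)[rule_format, of j] by auto
  qed simp
  show "K \<subseteq> L" using mono[of n] C by auto
  show "n > 0 \<Longrightarrow> K \<subset> L" using mono[of n] C by auto
qed

lemma chain_snoc:
  assumes "chain_len K L n" "L \<subset> L'" "is_ideal L'"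
  shows "chain_len K L' (Suc n)"
proof -
  obtain C where C: "C 0 = K" "C n = L" "\<forall>i\<le>n. is_ideal (C i)" "\<forall>i<n. C i \<subset> C (Suc i)"
    using assms unfolding chain_len_def by blast
  let ?D = "C(Suc n := L')"
  have "?D 0 = K" "?D (Suc n) = L'" using C by auto
  moreover have "\<forall>i\<le>Suc n. is_ideal (?D i)" using C assms by (auto simp: le_Suc_eq)
  moreover have "\<forall>i<Suc n. ?D i \<subset> ?D (Suc i)" using C assms by (auto simp: less_Suc_eq)
  ultimately show ?thesis unfolding chain_len_def by blast
qed

lemma chain_cons:
  assumes "chain_len K' L n" "K \<subset> K'" "is_ideal K"
  shows "chain_len K L (Suc n)"
proof -
  obtain C where C: "C 0 = K'" "C n = L" "\<forall>i\<le>n. is_ideal (C i)" "\<forall>i<n. C i \<subset> C (Suc i)"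
    using assms unfolding chain_len_def by blast
  define D where "D i = (if i = 0 then K else C (i - 1))" for i
  have "D 0 = K" "D (Suc n) = L" using C by (auto simp: D_def)
  moreover have "\<forall>i\<le>Suc n. is_ideal (D i)" using C assms by (auto simp: D_def)
  moreover have "\<forall>i<Suc n. D i \<subset> D (Suc i)"
  proof (intro allI impI)
    fix i assume "i < Suc n"
    then show "D i \<subset> D (Suc i)"
      using C assms by (cases i) (auto simp: D_def)
  qed
  ultimately show ?thesis unfolding chain_len_def by blast
qed

lemma chain_append:
  assumes "chain_len K L a" "chain_len L M b"
  shows "chain_len K M (a + b)"
  using assms(2)
proof (induction b arbitrary: M)
  case 0
  then obtain C where "C 0 = L" "C 0 = M" unfolding chain_len_def by auto
  then show ?case using assms(1) by simp
next
  case (Suc b)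
  obtain C where C: "C 0 = L" "C (Suc b) = M" "\<forall>i\<le>Suc b. is_ideal (C i)" "\<forall>i<Suc b. C i \<subset> C (Suc i)"
    using Suc.prems unfolding chain_len_def by blast
  have "\<forall>i\<le>b. is_ideal (C i)" "\<forall>i<b. C i \<subset> C (Suc i)" using C(3,4) by simp_all
  then have "chain_len L (C b) b" unfolding chain_len_def using C(1) by blast
  then have "chain_len K (C b) (a + b)" by (rule Suc.IH)
  then show ?case using C chain_snoc[of K "C b" "a+b" M] by auto
qed

lemma chain_weak:
  assumes "\<And>i. i \<le> n \<Longrightarrow> is_ideal (D i)" "\<And>i. i < n \<Longrightarrow> D i \<subseteq> D (Suc i)"
  shows "chain_len (D 0) (D n) (card {i. i < n \<and> D i \<noteq> D (Suc i)})"
  using assms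
proof (induction n)
  case 0
  then show ?case using chain_refl by simp
next
  case (Suc n)
  have IH: "chain_len (D 0) (D n) (card {i. i < n \<and> D i \<noteq> D (Suc i)})"
    using Suc by auto
  show ?case
  proof (cases "D n = D (Suc n)")
    case True
    then have "{i. i < Suc n \<and> D i \<noteq> D (Suc i)} = {i. i < n \<and> D i \<noteq> D (Suc i)}"
      by (auto simp: less_Suc_eq)
    then show ?thesis using IH True by simp
  next
    case False
    then have "{i. i < Suc n \<and> D i \<noteq> D (Suc i)} = insert n {i. i < n \<and> D i \<noteq> D (Suc i)}"
      by (auto simp: less_Suc_eq)
    then have "card {i. i < Suc n \<and> D i \<noteq> D (Suc i)} = Suc (card {i. i < n \<and> D i \<noteq> D (Suc i)})"
      by simp
    moreover have "D n \<subset> D (Suc n)" using False Suc.prems by auto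
    ultimately show ?thesis using chain_snoc[OF IH] Suc.prems by simp
  qed
qed

lemma ideal_sum_absorb: "is_ideal A \<Longrightarrow> is_ideal B \<Longrightarrow> B \<subseteq> A \<Longrightarrow> ideal_sum A B = A"
  using ideal_sum_least[of A A B] ideal_sum_left[of B A] by blast

lemma chain_modular:
  assumes "chain_len K M n" "K \<subseteq> L" "L \<subseteq> M" "is_ideal L"
  shows "\<exists>u v. n \<le> u + v \<and> chain_len K L u \<and> chain_len L M v"
proof -
  obtain C where C: "C 0 = K" "C n = M" "\<forall>i\<le>n. is_ideal (C i)" "\<forall>i<n. C i \<subset> C (Suc i)"
    using assms unfolding chain_len_def by blast
  define D where "D i = C i \<inter> L" for i
  define E where "E i = ideal_sum (C i) L" for i
  have cD: "chain_len (D 0) (D n) (card {i. i < n \<and> D i \<noteq> D (Suc i)})"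
  proof (rule chain_weak)
    fix i assume "i < n"
    then have "C i \<subseteq> C (Suc i)" using C by auto
    then show "D i \<subseteq> D (Suc i)" unfolding D_def by blast
  next
    fix i assume "i \<le> n"
    then show "is_ideal (D i)" unfolding D_def using C assms(4) by (simp add: ideal_Int)
  qed
  have cE: "chain_len (E 0) (E n) (card {i. i < n \<and> E i \<noteq> E (Suc i)})"
  proof (rule chain_weak)
    fix i assume "i < n"
    then have "C i \<subseteq> C (Suc i)" using C by auto
    then show "E i \<subseteq> E (Suc i)" unfolding E_def by (rule ideal_sum_mono) simp
  next
    fix i assume "i \<le> n"
    then show "is_ideal (E i)" unfolding E_def using C assms(4) by (simp add: ideal_sum_ideal)
  qed
  have "D 0 = K" "D n = L" using C assms unfolding D_def by blast+
  moreover have "E 0 = L" using C assms chain_props(1)[OF assms(1)]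
      ideal_sum_absorb[of L K] ideal_sum_comm[of K L] by (simp add: E_def)
  moreover have "E n = M" using C assms chain_props(2)[OF assms(1)]
    by (simp add: E_def ideal_sum_absorb)
  moreover have "n \<le> card {i. i < n \<and> D i \<noteq> D (Suc i)} + card {i. i < n \<and> E i \<noteq> E (Suc i)}"
  proof -
    have "{..<n} \<subseteq> {i. i < n \<and> D i \<noteq> D (Suc i)} \<union> {i. i < n \<and> E i \<noteq> E (Suc i)}"
    proof
      fix i assume i: "i \<in> {..<n}"
      show "i \<in> {i. i < n \<and> D i \<noteq> D (Suc i)} \<union> {i. i < n \<and> E i \<noteq> E (Suc i)}"
      proof (rule ccontr)
        assume "\<not> ?thesis"
        then have eqD: "C i \<inter> L = C (Suc i) \<inter> L" and eqE: "ideal_sum (C i) L = ideal_sum (C (Suc i)) L"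
          using i by (auto simp: D_def E_def)
        have "C (Suc i) \<subseteq> C i"
        proof
          fix x assume x: "x \<in> C (Suc i)"
          have "x \<in> ideal_sum (C (Suc i)) L" using x ideal_sum_left[OF assms(4)] by blast
          then have "x \<in> ideal_sum (C i) L" using eqE by simp
          then obtain c l where cl: "c \<in> C i" "l \<in> L" "x = c + l" by (rule ideal_sum_memE)
          have "C i \<subseteq> C (Suc i)" using C i by auto
          then have "l = x - c" "c \<in> C (Suc i)" using cl by auto
          then have "l \<in> C (Suc i)" using ideal_diff[of "C (Suc i)" x c] x C i by auto
          then have "l \<in> C i" using eqD cl by auto
          then show "x \<in> C i" using cl ideal_add[of "C i" c l] C i by auto
        qed
        then show False using C i by auto
      qed
    qed
    then have "card {..<n} \<le> card ({i. i < n \<and> D i \<noteq> D (Suc i)} \<union> {i. i < n \<and> E i \<noteq> E (Suc i)})"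
      by (intro card_mono) auto
    also have "\<dots> \<le> card {i. i < n \<and> D i \<noteq> D (Suc i)} + card {i. i < n \<and> E i \<noteq> E (Suc i)}"
      by (rule card_Un_le)
    finally show ?thesis by simp
  qed
  ultimately show ?thesis using cD cE by (intro exI[of _ "card {i. i < n \<and> D i \<noteq> D (Suc i)}"] exI[of _ "card {i. i < n \<and> E i \<noteq> E (Suc i)}"]) simp
qed

lemma chain_map:
  assumes "chain_len K L n"
    and "\<And>V. is_ideal V \<Longrightarrow> K \<subseteq> V \<Longrightarrow> V \<subseteq> L \<Longrightarrow> is_ideal (f V)"
    and "\<And>V W. is_ideal V \<Longrightarrow> is_ideal W \<Longrightarrow> K \<subseteq> V \<Longrightarrow> W \<subseteq> L \<Longrightarrow> V \<subset> W \<Longrightarrow> f V \<subset> f W"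
  shows "chain_len (f K) (f L) n"
proof -
  obtain C where C: "C 0 = K" "C n = L" "\<forall>i\<le>n. is_ideal (C i)" "\<forall>i<n. C i \<subset> C (Suc i)"
    using assms unfolding chain_len_def by blast
  have mono: "C i \<subseteq> C j" if "i \<le> j" "j \<le> n" for i j
    using that
  proof (induction j)
    case (Suc j)
    then show ?case using C(4)[rule_format, of j] by (auto simp: le_Suc_eq)
  qed simp
  have rng: "K \<subseteq> C i \<and> C i \<subseteq> L" if "i \<le> n" for i
    using mono[of 0 i] mono[of i n] that C by auto
  show ?thesis unfolding chain_len_def
  proof (intro exI[of _ "\<lambda>i. f (C i)"] conjI allI impI)
    show "f (C 0) = f K" "f (C n) = f L" using C by auto
    fix i
    show "i \<le> n \<Longrightarrow> is_ideal (f (C i))" using assms(2) rng C by auto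
    show "i < n \<Longrightarrow> f (C i) \<subset> f (C (Suc i))"
      using assms(3)[of "C i" "C (Suc i)"] rng[of i] rng[of "Suc i"] C by auto
  qed
qed

lemma chain_exists: "is_ideal K \<Longrightarrow> \<exists>n. chain_len K UNIV n"
proof (cases "K = UNIV")
  case True
  then show ?thesis using chain_refl ideal_UNIV by blast
next
  case False
  assume K: "is_ideal K"
  then have "chain_len K UNIV (Suc 0)" using chain_snoc[OF chain_refl[OF K], of UNIV] False ideal_UNIV by auto
  then show ?thesis by blast
qed

lemma quot_length_ge: "chain_len K UNIV n \<Longrightarrow> enat n \<le> quot_length K"
  unfolding quot_length_chain by (rule Sup_upper) blast

lemma quot_length_le: "(\<And>n. chain_len K UNIV n \<Longrightarrow> n \<le> B) \<Longrightarrow> quot_length K \<le> enat B"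
  unfolding quot_length_chain by (rule Sup_least) auto

lemma quot_length_attained:
  assumes "is_ideal K" "quot_length K \<noteq> \<infinity>"
  shows "\<exists>n. chain_len K UNIV n \<and> quot_length K = enat n"
proof -
  let ?S = "{enat n | n. chain_len K UNIV n}"
  have ne: "?S \<noteq> {}" using chain_exists[OF assms(1)] by blast
  have fin: "finite ?S"
  proof (rule ccontr)
    assume "infinite ?S"
    have "Sup ?S = (if ?S = {} then 0 else if finite ?S then Max ?S else \<infinity>)" by (rule Sup_enat_def)
    then have "Sup ?S = \<infinity>" using ne \<open>infinite ?S\<close> by (simp only: if_False if_True)
    then show False using assms(2) unfolding quot_length_chain by simp
  qed
  have "Sup ?S = (if ?S = {} then 0 else if finite ?S then Max ?S else \<infinity>)" by (rule Sup_enat_def)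
  then have "Sup ?S = Max ?S" using ne fin by (simp only: if_False if_True)
  moreover have "Max ?S \<in> ?S" by (rule Max_in[OF fin ne])
  ultimately show ?thesis unfolding quot_length_chain by auto
qed



definition bounded_len :: "'a::comm_ring_1 set \<Rightarrow> 'a set \<Rightarrow> nat \<Rightarrow> bool" where
  "bounded_len K L B \<longleftrightarrow> (\<forall>n. chain_len K L n \<longrightarrow> n \<le> B)"

lemma bounded_refl: "bounded_len L L 0"
  unfolding bounded_len_def using chain_props(4) by blast

lemma bounded_trans:
  assumes "K \<subseteq> L" "L \<subseteq> M" "is_ideal L" "bounded_len K L a" "bounded_len L M b"
  shows "bounded_len K M (a + b)"
  unfolding bounded_len_def
proof (intro allI impI)
  fix n assume "chain_len K M n"
  then obtain u v where "n \<le> u + v" "chain_len K L u" "chain_len L M v"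
    using chain_modular assms(1-3) by blast
  then show "n \<le> a + b" using assms(4,5) unfolding bounded_len_def by fastforce
qed

lemma chain_sub:
  assumes "chain_len K' L n" "K \<subseteq> K'" "is_ideal K"
  shows "\<exists>n'\<ge>n. chain_len K L n'"
proof (cases "K = K'")
  case True then show ?thesis using assms by blast
next
  case False
  then have "chain_len K L (Suc n)" using chain_cons[OF assms(1) _ assms(3)] assms(2) by blast
  then show ?thesis by (intro exI[of _ "Suc n"]) simp
qed

lemma bounded_sub:
  assumes "bounded_len K UNIV B" "K \<subseteq> K'" "is_ideal K"
  shows "bounded_len K' UNIV B"
  unfolding bounded_len_def
proof (intro allI impI)
  fix n assume "chain_len K' UNIV n"
  then obtain n' where "n' \<ge> n" "chain_len K UNIV n'" using chain_sub assms(2,3) by blast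
  then show "n \<le> B" using assms(1) unfolding bounded_len_def by fastforce
qed

definition principal :: "'a::comm_ring_1 \<Rightarrow> 'a set" where
  "principal g = range (\<lambda>r. r * g)"

lemma principal_ideal: "is_ideal (principal g)"
  unfolding principal_def
proof (rule is_idealI)
  show "0 \<in> range (\<lambda>r. r * g)" by (metis mult_zero_left rangeI)
  fix x y assume "x \<in> range (\<lambda>r. r * g)" "y \<in> range (\<lambda>r. r * g)"
  then obtain a b where "x = a * g" "y = b * g" by blast
  then show "x + y \<in> range (\<lambda>r. r * g)" using distrib_right[of a b g] by (metis rangeI)
next
  fix r x assume "x \<in> range (\<lambda>r. r * g)"
  then obtain a where "x = a * g" by blast
  then show "r * x \<in> range (\<lambda>r. r * g)" using mult.assoc[of r a g] by (metis rangeI)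
qed

lemma principal_mem: "r * g \<in> principal g"
  unfolding principal_def by blast

lemma bounded_principal:
  assumes L: "is_ideal L" and Q: "is_ideal Q" and QL: "\<And>q. q \<in> Q \<Longrightarrow> q * g \<in> L"
    and B: "bounded_len Q UNIV B"
  shows "bounded_len L (ideal_sum L (principal g)) B"
  unfolding bounded_len_def
proof (intro allI impI)
  fix n assume ch: "chain_len L (ideal_sum L (principal g)) n"
  let ?M = "ideal_sum L (principal g)"
  have "chain_len (ideal_colon L g) (ideal_colon ?M g) n"
  proof (rule chain_map[OF ch])
    fix V :: "'a set" assume "is_ideal V" then show "is_ideal (ideal_colon V g)" by (rule ideal_colon_ideal)
  next
    fix V W :: "'a set" assume V: "is_ideal V" and W: "is_ideal W" and LV: "L \<subseteq> V" and WM: "W \<subseteq> ?M"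
      and VW: "V \<subset> W"
    then obtain w where w: "w \<in> W" "w \<notin> V" by blast
    then have "w \<in> ?M" using WM by blast
    then obtain l x where lx: "l \<in> L" "x \<in> principal g" "w = l + x" by (rule ideal_sum_memE)
    then obtain r where r: "x = r * g" unfolding principal_def by blast
    have "l \<in> W" using lx LV VW by blast
    then have "r * g \<in> W" using ideal_diff[OF W w(1), of l] lx r by simp
    moreover have "r * g \<notin> V"
    proof
      assume "r * g \<in> V"
      then have "l + r * g \<in> V" using ideal_add[OF V, of l] lx LV by blast
      then show False using w lx r by simp
    qed
    ultimately have "r \<in> ideal_colon W g" "r \<notin> ideal_colon V g" unfolding ideal_colon_def by auto
    moreover have "ideal_colon V g \<subseteq> ideal_colon W g" using VW unfolding ideal_colon_def by blast
    ultimately show "ideal_colon V g \<subset> ideal_colon W g" by blast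
  qed
  moreover have "ideal_colon ?M g = UNIV"
  proof -
    have "1 * g \<in> ?M" using principal_mem[of 1 g] ideal_sum_right[OF L] by blast
    then show ?thesis using ideal_one[OF ideal_colon_ideal[OF ideal_sum_ideal[OF L principal_ideal]]]
      unfolding ideal_colon_def by simp
  qed
  ultimately have "chain_len (ideal_colon L g) UNIV n" by simp
  moreover have "Q \<subseteq> ideal_colon L g" using QL unfolding ideal_colon_def by blast
  ultimately show "n \<le> B" using bounded_sub[OF B _ Q] unfolding bounded_len_def by blast
qed

lemma ideal_sum_assoc: "ideal_sum (ideal_sum A B) C = ideal_sum A (ideal_sum B C)"
proof
  show "ideal_sum (ideal_sum A B) C \<subseteq> ideal_sum A (ideal_sum B C)"
  proof
    fix x assume "x \<in> ideal_sum (ideal_sum A B) C"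
    then obtain y c where "y \<in> ideal_sum A B" "c \<in> C" "x = y + c" by (rule ideal_sum_memE)
    moreover from this obtain a b where "a \<in> A" "b \<in> B" "y = a + b" by (auto elim: ideal_sum_memE)
    ultimately show "x \<in> ideal_sum A (ideal_sum B C)"
      using ideal_sum_memI[of a A "b + c" "ideal_sum B C"] ideal_sum_memI[of b B c C] by (simp add: add.assoc)
  qed
  show "ideal_sum A (ideal_sum B C) \<subseteq> ideal_sum (ideal_sum A B) C"
  proof
    fix x assume "x \<in> ideal_sum A (ideal_sum B C)"
    then obtain a y where "a \<in> A" "y \<in> ideal_sum B C" "x = a + y" by (rule ideal_sum_memE)
    moreover from this obtain b c where "b \<in> B" "c \<in> C" "y = b + c" by (auto elim: ideal_sum_memE)
    ultimately show "x \<in> ideal_sum (ideal_sum A B) C"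
      using ideal_sum_memI[of "a + b" "ideal_sum A B" c C] ideal_sum_memI[of a A b B] by (simp add: add.assoc)
  qed
qed

lemma ideal_gen_empty: "ideal_gen {} = {0}"
proof
  have "is_ideal {0::'a}" by (rule is_idealI) auto
  then show "ideal_gen {} \<subseteq> {0::'a}" by (rule ideal_gen_least) simp
  show "{0} \<subseteq> ideal_gen {}" using ideal_0[OF ideal_gen_ideal] by blast
qed

lemma ideal_gen_insert: "ideal_gen (insert g S) = ideal_sum (ideal_gen S) (principal g)"
proof
  show "ideal_gen (insert g S) \<subseteq> ideal_sum (ideal_gen S) (principal g)"
  proof (rule ideal_gen_least[OF ideal_sum_ideal[OF ideal_gen_ideal principal_ideal]])
    have "g \<in> principal g" using principal_mem[of 1 g] by simp
    then have "g \<in> ideal_sum (ideal_gen S) (principal g)" using ideal_sum_right[OF ideal_gen_ideal] by blast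
    moreover have "S \<subseteq> ideal_sum (ideal_gen S) (principal g)"
      using ideal_gen_sub ideal_sum_left[OF principal_ideal] by blast
    ultimately show "insert g S \<subseteq> ideal_sum (ideal_gen S) (principal g)" by blast
  qed
  show "ideal_sum (ideal_gen S) (principal g) \<subseteq> ideal_gen (insert g S)"
  proof (rule ideal_sum_least[OF ideal_gen_ideal])
    show "ideal_gen S \<subseteq> ideal_gen (insert g S)" by (rule ideal_gen_mono) blast
    show "principal g \<subseteq> ideal_gen (insert g S)"
      unfolding principal_def using ideal_mult[OF ideal_gen_ideal, of g "insert g S"] ideal_gen_sub by blast
  qed
qed

lemma bounded_fg:
  assumes "finite S" "is_ideal L" "is_ideal Q" "\<And>g q. g \<in> S \<Longrightarrow> q \<in> Q \<Longrightarrow> q * g \<in> L"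
    and B: "bounded_len Q UNIV B"
  shows "bounded_len L (ideal_sum L (ideal_gen S)) (card S * B)"
  using assms(1,4)
proof (induction S rule: finite_induct)
  case empty
  have "is_ideal {0::'a}" by (rule is_idealI) auto
  then have "ideal_sum L {0} = L" using ideal_sum_absorb[OF assms(2), of "{0}"] ideal_0[OF assms(2)]
    by simp
  then show ?case using bounded_refl by (simp add: ideal_gen_empty)
next
  case (insert g S)
  let ?L' = "ideal_sum L (ideal_gen S)"
  have L': "is_ideal ?L'" by (rule ideal_sum_ideal[OF assms(2) ideal_gen_ideal])
  have b1: "bounded_len L ?L' (card S * B)" using insert by auto
  have "L \<subseteq> ?L'" by (rule ideal_sum_left[OF ideal_gen_ideal])
  have b2: "bounded_len ?L' (ideal_sum ?L' (principal g)) B"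
  proof (rule bounded_principal[OF L' assms(3) _ B])
    fix q assume "q \<in> Q" then have "q * g \<in> L" using insert.prems by blast
    then show "q * g \<in> ?L'" using \<open>L \<subseteq> ?L'\<close> by blast
  qed
  have eq: "ideal_sum L (ideal_gen (insert g S)) = ideal_sum ?L' (principal g)"
    by (simp add: ideal_gen_insert ideal_sum_assoc)
  have "?L' \<subseteq> ideal_sum ?L' (principal g)" by (rule ideal_sum_left[OF principal_ideal])
  then have "bounded_len L (ideal_sum ?L' (principal g)) (card S * B + B)"
    using bounded_trans[OF \<open>L \<subseteq> ?L'\<close> _ L' b1 b2] by blast
  then show ?case using eq insert.hyps by (simp add: add.commute)
qed

lemma bounded_UNIV: "bounded_len UNIV UNIV 0"
  by (rule bounded_refl)

lemma bounded_pow: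
  assumes N: "noetherian_ring TYPE('a::comm_ring_1)" and Q: "is_ideal (Q::'a set)" and B: "bounded_len Q UNIV B"
  shows "\<exists>Bk. bounded_len (ideal_pow Q k) UNIV Bk"
proof (induction k)
  case 0
  then show ?case using bounded_UNIV by auto
next
  case (Suc k)
  then obtain Bk where Bk: "bounded_len (ideal_pow Q k) UNIV Bk" by blast
  obtain S where S: "finite S" "ideal_pow Q k = ideal_gen S"
    using N ideal_pow_ideal unfolding noetherian_ring_def by blast
  let ?L = "ideal_pow Q (Suc k)"
  have "bounded_len ?L (ideal_sum ?L (ideal_gen S)) (card S * B)"
  proof (rule bounded_fg[OF S(1) ideal_pow_ideal Q _ B])
    fix g q assume "g \<in> S" "q \<in> Q"
    then have "g \<in> ideal_pow Q k" using S ideal_gen_sub by blast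
    then have "q * g \<in> ideal_pow Q (1 + k)" using ideal_pow_mult[OF Q, of q 1 g k] \<open>q \<in> Q\<close> ideal_pow_1[OF Q] by simp
    then show "q * g \<in> ?L" by simp
  qed
  moreover have "ideal_sum (ideal_pow Q k) ?L = ideal_pow Q k"
    by (rule ideal_sum_absorb[OF ideal_pow_ideal ideal_pow_ideal ideal_pow_Suc_sub[OF Q]])
  then have "ideal_sum ?L (ideal_gen S) = ideal_pow Q k" using S(2) ideal_sum_comm by metis
  ultimately have "bounded_len ?L (ideal_pow Q k) (card S * B)" by simp
  then have "bounded_len ?L UNIV (card S * B + Bk)"
    using bounded_trans[OF ideal_pow_Suc_sub[OF Q] _ ideal_pow_ideal _ Bk] by blast
  then show ?case by blast
qed

lemma bounded_maximal:
  assumes "maximal_ideal m"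
  shows "bounded_len m UNIV 1"
  unfolding bounded_len_def
proof (intro allI impI)
  fix n assume "chain_len m UNIV n"
  then obtain C where C: "C 0 = m" "C n = UNIV" "\<forall>i\<le>n. is_ideal (C i)" "\<forall>i<n. C i \<subset> C (Suc i)"
    unfolding chain_len_def by blast
  show "n \<le> 1"
  proof (rule ccontr)
    assume "\<not> n \<le> 1"
    then have n: "0 < n" "1 < n" "1 \<le> n" by auto
    have "C 0 \<subset> C 1" using C(4) n(1) by simp
    moreover have "C 1 \<subset> C 2" using C(4)[rule_format, OF n(2)] by (simp add: numeral_2_eq_2)
    moreover have "is_ideal (C 1)" using C(3) n(3) by blast
    ultimately have "C 0 \<subset> C 1" "C 1 \<subset> C 2" "is_ideal (C 1)" by blast+
    then have "C 1 = UNIV" using assms C(1) unfolding maximal_ideal_def by blast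
    then show False using \<open>C 1 \<subset> C 2\<close> by blast
  qed
qed

lemma pow_radical_aux:
  assumes "finite S" "S \<noteq> {}"
  shows "\<forall>d L. sum d S = D \<longrightarrow> is_ideal L \<longrightarrow> (\<forall>x\<in>S. d x \<ge> 1 \<and> x ^ d x \<in> L)
           \<longrightarrow> ideal_pow (ideal_gen S) D \<subseteq> L"
proof (induction D)
  case 0
  show ?case
  proof (intro allI impI)
    fix d :: "'a \<Rightarrow> nat" and L
    assume "sum d S = 0" "\<forall>x\<in>S. d x \<ge> 1 \<and> x ^ d x \<in> L"
    then show "ideal_pow (ideal_gen S) 0 \<subseteq> L" using assms by (auto simp: sum_eq_0_iff)
  qed
next
  case (Suc D)
  show ?case
  proof (intro allI impI)
    fix d :: "'a \<Rightarrow> nat" and L :: "'a set"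
    assume sd: "sum d S = Suc D" and L: "is_ideal L" and dL: "\<forall>x\<in>S. d x \<ge> 1 \<and> x ^ d x \<in> L"
    let ?G = "ideal_gen S"
    define X where "X = {a. \<forall>b\<in>ideal_pow ?G D. a * b \<in> L}"
    have X: "is_ideal X" unfolding X_def
      by (rule is_idealI) (auto simp: distrib_right mult.assoc intro: ideal_add[OF L] ideal_mult[OF L] ideal_0[OF L])
    have "S \<subseteq> X"
    proof
      fix x assume x: "x \<in> S"
      show "x \<in> X"
      proof (cases "d x = 1")
        case True
        then have "x \<in> L" using dL x by force
        then show ?thesis unfolding X_def using ideal_mult2[OF L] by blast
      next
        case False
        then have dx: "d x \<ge> 2" using dL x by force
        define d' where "d' = d(x := d x - 1)"
        have "sum d S = d x + sum d (S - {x})" using x assms(1) by (simp add: sum.remove)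
        moreover have "sum d' S = d' x + sum d' (S - {x})" using x assms(1) by (simp add: sum.remove)
        moreover have "sum d' (S - {x}) = sum d (S - {x})" unfolding d'_def by (rule sum.cong) auto
        ultimately have sd': "sum d' S = D" using sd dx by (simp add: d'_def)
        have "ideal_pow ?G D \<subseteq> ideal_colon L x"
        proof (rule Suc.IH[rule_format, OF sd' ideal_colon_ideal[OF L]])
          fix y assume y: "y \<in> S"
          show "d' y \<ge> 1 \<and> y ^ d' y \<in> ideal_colon L x"
          proof (cases "y = x")
            case True
            have "x ^ (d x - 1) * x = x ^ d x" using dx by (metis Suc_diff_1 le_trans one_le_numeral not_one_le_zero
                  power_Suc2 gr0I)
            then show ?thesis using True dx dL x unfolding d'_def ideal_colon_def by auto
          next
            case False
            then show ?thesis using dL y ideal_mult2[OF L] unfolding d'_def ideal_colon_def by auto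
          qed
        qed
        then show ?thesis unfolding X_def ideal_colon_def by (auto simp: mult.commute)
      qed
    qed
    then have "?G \<subseteq> X" by (rule ideal_gen_least[OF X])
    then show "ideal_pow ?G (Suc D) \<subseteq> L"
      unfolding ideal_pow.simps by (intro ideal_prod_least[OF L]) (auto simp: X_def)
  qed
qed

lemma maximal_pow_sub:
  assumes N: "noetherian_ring TYPE('a::comm_ring_1)" and J: "is_ideal (J::'a set)" "m_primary m J"
    and m: "is_ideal m"
  shows "\<exists>t. ideal_pow m t \<subseteq> J"
proof -
  obtain S0 where S0: "finite S0" "m = ideal_gen S0" using N m unfolding noetherian_ring_def by blast
  let ?S = "insert 0 S0"
  have gen: "ideal_gen ?S = m"
  proof
    have "S0 \<subseteq> m" using S0(2) ideal_gen_sub by blast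
    then have "?S \<subseteq> m" using ideal_0[OF m] by blast
    then show "ideal_gen ?S \<subseteq> m" by (rule ideal_gen_least[OF m])
    show "m \<subseteq> ideal_gen ?S" using S0 ideal_gen_mono[of S0 ?S] by blast
  qed
  have Sm: "?S \<subseteq> m" using gen ideal_gen_sub by blast
  have rad: "ideal_radical J = m" "J \<noteq> UNIV" using J(2) unfolding m_primary_def primary_ideal_def by blast+
  have ex: "\<exists>n. x ^ n \<in> J" if "x \<in> ?S" for x using Sm that rad unfolding ideal_radical_def by blast
  define d where "d x = (SOME n. x ^ n \<in> J)" for x
  have dJ: "x ^ d x \<in> J" if "x \<in> ?S" for x unfolding d_def using someI_ex[OF ex[OF that]] .
  have d1: "d x \<ge> 1" if "x \<in> ?S" for x
  proof (rule ccontr)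
    assume "\<not> d x \<ge> 1" then have "d x = 0" by simp
    then have "1 \<in> J" using dJ[OF that] by simp
    then show False using ideal_one[OF J(1)] rad by blast
  qed
  have "\<forall>x\<in>?S. d x \<ge> 1 \<and> x ^ d x \<in> J" using dJ d1 by blast
  then have "ideal_pow (ideal_gen ?S) (sum d ?S) \<subseteq> J"
    using pow_radical_aux[of ?S "sum d ?S", rule_format, OF _ _ refl J(1)] S0(1) by blast
  then show ?thesis using gen by auto
qed



definition subring :: "'b::comm_ring_1 set \<Rightarrow> bool" where
  "subring S \<longleftrightarrow> 0 \<in> S \<and> 1 \<in> S \<and> (\<forall>x\<in>S. \<forall>y\<in>S. x + y \<in> S \<and> x * y \<in> S) \<and> (\<forall>x\<in>S. - x \<in> S)"

definition s_ideal :: "'b::comm_ring_1 set \<Rightarrow> 'b set \<Rightarrow> bool" where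
  "s_ideal S K \<longleftrightarrow> K \<subseteq> S \<and> 0 \<in> K \<and> (\<forall>x\<in>K. \<forall>y\<in>K. x + y \<in> K) \<and> (\<forall>r\<in>S. \<forall>x\<in>K. r * x \<in> K)"

definition s_span :: "'b::comm_ring_1 set \<Rightarrow> 'b list \<Rightarrow> 'b set" where
  "s_span S xs = {\<Sum>i<length xs. c i * xs ! i | c. \<forall>i<length xs. c i \<in> S}"

definition s_noeth :: "'b::comm_ring_1 set \<Rightarrow> bool" where
  "s_noeth S \<longleftrightarrow> (\<forall>K. s_ideal S K \<longrightarrow> (\<exists>xs. set xs \<subseteq> K \<and> K = s_span S xs))"

lemma subringD:
  assumes "subring S"
  shows "0 \<in> S" "1 \<in> S" "x \<in> S \<Longrightarrow> y \<in> S \<Longrightarrow> x + y \<in> S" "x \<in> S \<Longrightarrow> y \<in> S \<Longrightarrow> x * y \<in> S"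
    "x \<in> S \<Longrightarrow> - x \<in> S" "x \<in> S \<Longrightarrow> y \<in> S \<Longrightarrow> x - y \<in> S"
proof -
  show "0 \<in> S" "1 \<in> S" using assms unfolding subring_def by blast+
  show "x \<in> S \<Longrightarrow> y \<in> S \<Longrightarrow> x + y \<in> S" "x \<in> S \<Longrightarrow> y \<in> S \<Longrightarrow> x * y \<in> S"
    "x \<in> S \<Longrightarrow> - x \<in> S" using assms unfolding subring_def by blast+
  show "x \<in> S \<Longrightarrow> y \<in> S \<Longrightarrow> x - y \<in> S"
    using assms unfolding subring_def diff_conv_add_uminus by blast
qed

lemma subring_sum: "subring S \<Longrightarrow> (\<And>i. i \<in> A \<Longrightarrow> f i \<in> S) \<Longrightarrow> sum f A \<in> S"
proof (induction A rule: infinite_finite_induct)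
  case (infinite A) then show ?case using subringD(1) by simp
next
  case empty then show ?case using subringD(1) by simp
next
  case (insert x F) then show ?case using subringD(3)[of S "f x" "sum f F"] by simp
qed

lemma s_idealD:
  assumes "s_ideal S K"
  shows "K \<subseteq> S" "0 \<in> K" "x \<in> K \<Longrightarrow> y \<in> K \<Longrightarrow> x + y \<in> K" "r \<in> S \<Longrightarrow> x \<in> K \<Longrightarrow> r * x \<in> K"
  using assms unfolding s_ideal_def by blast+

lemma s_ideal_sum: "s_ideal S K \<Longrightarrow> (\<And>i. i \<in> A \<Longrightarrow> f i \<in> K) \<Longrightarrow> sum f A \<in> K"
proof (induction A rule: infinite_finite_induct)
  case (infinite A) then show ?case using s_idealD(2) by simp
next
  case empty then show ?case using s_idealD(2) by simp
next
  case (insert x F) then show ?case using s_idealD(3)[of S K "f x" "sum f F"] by simp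
qed

lemma s_ideal_diff:
  assumes "subring S" "s_ideal S K" "x \<in> K" "y \<in> K"
  shows "x - y \<in> K"
proof -
  have m1: "- 1 \<in> S" using subringD(2)[OF assms(1)] subringD(5)[OF assms(1)] by blast
  have "(- 1) * y \<in> K" by (rule s_idealD(4)[OF assms(2) m1 assms(4)])
  then have "x + (- 1) * y \<in> K" by (rule s_idealD(3)[OF assms(2) assms(3)])
  then show ?thesis by simp
qed

lemma s_span_ideal:
  assumes S: "subring S" and xs: "set xs \<subseteq> S"
  shows "s_ideal S (s_span S xs)"
  unfolding s_ideal_def
proof (intro conjI ballI)
  show "s_span S xs \<subseteq> S"
  proof
    fix x assume "x \<in> s_span S xs"
    then obtain c where "x = (\<Sum>i<length xs. c i * xs ! i)" "\<forall>i<length xs. c i \<in> S"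
      unfolding s_span_def by blast
    then show "x \<in> S" using xs S by (auto intro!: subring_sum subringD(4))
  qed
  show "0 \<in> s_span S xs" unfolding s_span_def using subringD(1)[OF S]
    by (auto intro!: exI[of _ "\<lambda>_. 0"])
  fix x y assume "x \<in> s_span S xs" "y \<in> s_span S xs"
  then obtain c d where "x = (\<Sum>i<length xs. c i * xs ! i)" "\<forall>i<length xs. c i \<in> S"
      "y = (\<Sum>i<length xs. d i * xs ! i)" "\<forall>i<length xs. d i \<in> S"
    unfolding s_span_def by blast
  then show "x + y \<in> s_span S xs" unfolding s_span_def
    by (auto intro!: exI[of _ "\<lambda>i. c i + d i"] subringD(3)[OF S] simp: distrib_right sum.distrib)
next
  fix r x assume r: "r \<in> S" and "x \<in> s_span S xs"
  then obtain c where "x = (\<Sum>i<length xs. c i * xs ! i)" "\<forall>i<length xs. c i \<in> S"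
    unfolding s_span_def by blast
  then show "r * x \<in> s_span S xs" unfolding s_span_def using r
    by (auto intro!: exI[of _ "\<lambda>i. r * c i"] subringD(4)[OF S] simp: sum_distrib_left mult.assoc)
qed

lemma s_span_least:
  assumes "s_ideal S K" "set xs \<subseteq> K"
  shows "s_span S xs \<subseteq> K"
proof
  fix x assume "x \<in> s_span S xs"
  then obtain c where "x = (\<Sum>i<length xs. c i * xs ! i)" "\<forall>i<length xs. c i \<in> S"
    unfolding s_span_def by blast
  then show "x \<in> K" using assms by (auto intro!: s_ideal_sum s_idealD(4))
qed

lemma s_span_mem:
  assumes S: "subring S" and "x \<in> set xs"
  shows "x \<in> s_span S xs"
proof -
  obtain k where k: "k < length xs" "xs ! k = x" using assms(2) by (auto simp: in_set_conv_nth)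
  have "(\<Sum>i<length xs. (if i = k then 1 else 0) * xs ! i) = (\<Sum>i<length xs. if i = k then xs ! k else 0)"
    by (rule sum.cong) auto
  also have "\<dots> = x" using k by simp
  finally show ?thesis unfolding s_span_def using subringD(1,2)[OF S]
    by (auto intro!: exI[of _ "\<lambda>i. if i = k then 1 else 0"])
qed

lemma s_span_prefix:
  assumes S: "subring S"
  shows "s_span S xs \<subseteq> s_span S (xs @ ys)"
proof
  fix x assume "x \<in> s_span S xs"
  then obtain c where x: "x = (\<Sum>i<length xs. c i * xs ! i)" and c: "\<forall>i<length xs. c i \<in> S"
    unfolding s_span_def by blast
  define d where "d i = (if i < length xs then c i else 0)" for i
  have "(\<Sum>i<length (xs @ ys). d i * (xs @ ys) ! i) = (\<Sum>i<length xs. d i * (xs @ ys) ! i)"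
    by (rule sum.mono_neutral_right) (auto simp: d_def)
  also have "\<dots> = x" unfolding x by (rule sum.cong) (auto simp: d_def nth_append)
  finally show "x \<in> s_span S (xs @ ys)" unfolding s_span_def using c subringD(1)[OF S]
    by (auto intro!: exI[of _ d] simp: d_def)
qed

lemma s_noeth_acc:
  assumes S: "subring S" and N: "s_noeth S"
    and L: "\<And>n. s_ideal S (\<Lambda> n)" and mono: "\<And>n m. n \<le> m \<Longrightarrow> \<Lambda> n \<subseteq> \<Lambda> m"
  shows "\<exists>n. \<Lambda> (Suc n) \<subseteq> \<Lambda> n"
proof -
  let ?U = "\<Union>n. \<Lambda> n"
  have U: "s_ideal S ?U" unfolding s_ideal_def
  proof (intro conjI ballI)
    show "?U \<subseteq> S" using s_idealD(1)[OF L] by blast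
    show "0 \<in> ?U" using s_idealD(2)[OF L[of 0]] by blast
    fix x y assume "x \<in> ?U" "y \<in> ?U"
    then obtain a b where "x \<in> \<Lambda> a" "y \<in> \<Lambda> b" by blast
    then have "x \<in> \<Lambda> (max a b)" "y \<in> \<Lambda> (max a b)" using mono[of a "max a b"] mono[of b "max a b"] by auto
    then have "x + y \<in> \<Lambda> (max a b)" by (rule s_idealD(3)[OF L])
    then show "x + y \<in> ?U" by blast
  next
    fix r x assume r: "r \<in> S" and "x \<in> ?U"
    then obtain a where "x \<in> \<Lambda> a" by blast
    then have "r * x \<in> \<Lambda> a" by (rule s_idealD(4)[OF L r])
    then show "r * x \<in> ?U" by blast
  qed
  obtain xs where xs: "set xs \<subseteq> ?U" "?U = s_span S xs" using N[unfolded s_noeth_def, rule_format, OF U] by blast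
  have "\<forall>x\<in>set xs. \<exists>n. x \<in> \<Lambda> n" using xs(1) by (simp add: subset_iff)
  then have "\<exists>k. \<forall>x\<in>set xs. x \<in> \<Lambda> (k x)" by (rule bchoice)
  then obtain k where k: "\<forall>x\<in>set xs. x \<in> \<Lambda> (k x)" by blast
  define M where "M = Max (k ` set xs)"
  have "set xs \<subseteq> \<Lambda> M"
  proof
    fix x assume x: "x \<in> set xs"
    then have "k x \<le> M" unfolding M_def by simp
    then have "\<Lambda> (k x) \<subseteq> \<Lambda> M" by (rule mono)
    then show "x \<in> \<Lambda> M" using k x by blast
  qed
  then have "s_span S xs \<subseteq> \<Lambda> M" by (rule s_span_least[OF L])
  then have "?U \<subseteq> \<Lambda> M" using xs(2) by simp
  moreover have "\<Lambda> (Suc M) \<subseteq> ?U" by blast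
  ultimately show ?thesis by (intro exI[of _ M]) blast
qed

definition polys :: "'b::comm_ring_1 set \<Rightarrow> 'b poly set" where
  "polys S = {p. \<forall>n. coeff p n \<in> S}"

lemma polys_subring:
  assumes S: "subring S"
  shows "subring (polys S)"
proof -
  have 0: "0 \<in> polys S" unfolding polys_def using subringD(1)[OF S] by simp
  have 1: "1 \<in> polys S" unfolding polys_def mem_Collect_eq
  proof (rule allI)
    fix n show "coeff 1 n \<in> S" using subringD(1,2)[OF S] by (cases n) simp_all
  qed
  have add: "x + y \<in> polys S" if "x \<in> polys S" "y \<in> polys S" for x y
    unfolding polys_def mem_Collect_eq
  proof (rule allI)
    fix n have "coeff x n \<in> S" "coeff y n \<in> S" using that unfolding polys_def by blast+
    then show "coeff (x + y) n \<in> S" using subringD(3)[OF S] by simp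
  qed
  have mul: "x * y \<in> polys S" if "x \<in> polys S" "y \<in> polys S" for x y
    unfolding polys_def mem_Collect_eq
  proof (rule allI)
    fix n
    have "(\<Sum>i\<le>n. coeff x i * coeff y (n - i)) \<in> S"
    proof (rule subring_sum[OF S])
      fix i
      have "coeff x i \<in> S" "coeff y (n - i) \<in> S" using that unfolding polys_def by blast+
      then show "coeff x i * coeff y (n - i) \<in> S" by (rule subringD(4)[OF S])
    qed
    then show "coeff (x * y) n \<in> S" by (simp add: coeff_mult)
  qed
  have neg: "- x \<in> polys S" if "x \<in> polys S" for x
    unfolding polys_def mem_Collect_eq
  proof (rule allI)
    fix n have "coeff x n \<in> S" using that unfolding polys_def by blast
    then show "coeff (- x) n \<in> S" using subringD(5)[OF S] by simp
  qed
  show ?thesis unfolding subring_def using 0 1 add mul neg by blast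
qed

lemma monom_polys: "c \<in> S \<Longrightarrow> subring S \<Longrightarrow> monom c k \<in> polys S"
  unfolding polys_def by (auto simp: coeff_monom subringD(1))

lemma degree_less_aux:
  fixes r :: "'b::comm_ring_1 poly"
  assumes "degree r \<le> d" "coeff r d = 0" "r \<noteq> 0"
  shows "degree r < d"
proof (rule ccontr)
  assume "\<not> degree r < d"
  then have "degree r = d" using assms(1) by simp
  then show False using assms(2,3) leading_coeff_0_iff[of r] by simp
qed

theorem hilbert_basis:
  assumes S: "subring S" and N: "s_noeth S"
  shows "s_noeth (polys S)"
  unfolding s_noeth_def
proof (intro allI impI, rule ccontr)
  fix K assume K: "s_ideal (polys S) K" and nfg: "\<not> (\<exists>xs. set xs \<subseteq> K \<and> K = s_span (polys S) xs)"
  let ?P = "polys S"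
  have P: "subring ?P" by (rule polys_subring[OF S])
  have KP: "K \<subseteq> ?P" using s_idealD(1)[OF K] .
  have ex: "\<exists>p. p \<in> K \<and> p \<notin> s_span ?P xs" if "set xs \<subseteq> K" for xs
  proof (rule ccontr)
    assume "\<not> ?thesis"
    then have "K \<subseteq> s_span ?P xs" by blast
    moreover have "s_span ?P xs \<subseteq> K" by (rule s_span_least[OF K that])
    ultimately show False using nfg that by blast
  qed
  define pick where "pick xs = arg_min degree (\<lambda>p. p \<in> K \<and> p \<notin> s_span ?P xs)" for xs
  have pick: "pick xs \<in> K" "pick xs \<notin> s_span ?P xs"
    "\<And>p. p \<in> K \<Longrightarrow> p \<notin> s_span ?P xs \<Longrightarrow> degree (pick xs) \<le> degree p"
    if xsK: "set xs \<subseteq> K" for xs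
  proof -
    obtain p where "p \<in> K \<and> p \<notin> s_span ?P xs" using ex[OF xsK] by blast
    then show "pick xs \<in> K" "pick xs \<notin> s_span ?P xs" unfolding pick_def
      using arg_min_natI[of "\<lambda>p. p \<in> K \<and> p \<notin> s_span ?P xs" p degree] by auto
    fix q assume "q \<in> K" "q \<notin> s_span ?P xs"
    then show "degree (pick xs) \<le> degree q" unfolding pick_def by (intro arg_min_nat_le) auto
  qed
  define gs where "gs = rec_nat [] (\<lambda>n xs. xs @ [pick xs])"
  have gs0: "gs 0 = []" and gsS: "gs (Suc n) = gs n @ [pick (gs n)]" for n unfolding gs_def by simp_all
  have gsK: "set (gs n) \<subseteq> K" for n
  proof (induction n)
    case 0 then show ?case by (simp add: gs0)
  next
    case (Suc n) then show ?case using pick(1)[OF Suc] by (simp add: gsS)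
  qed
  define q where "q n = pick (gs n)" for n
  have gs_map: "gs n = map q [0..<n]" for n
    by (induction n) (simp_all add: gs0 gsS q_def)
  have qK: "q n \<in> K" for n using pick(1)[OF gsK] q_def by simp
  have qP: "q n \<in> ?P" for n using qK KP by blast
  have qn: "q n \<notin> s_span ?P (gs n)" for n using pick(2)[OF gsK] q_def by simp
  have span_mono: "s_span ?P (gs i) \<subseteq> s_span ?P (gs n)" if "i \<le> n" for i n
  proof -
    have "[0..<n] = [0..<i] @ [i..<n]" using that upt_add_eq_append[of 0 i "n-i"] by simp
    then have "gs n = gs i @ map q [i..<n]" by (simp add: gs_map)
    then show ?thesis using s_span_prefix[OF P, of "gs i" "map q [i..<n]"] by simp
  qed
  have deg_mono: "degree (q i) \<le> degree (q n)" if "i < n" for i n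
  proof -
    have "q n \<notin> s_span ?P (gs i)" using qn span_mono[of i n] that by auto
    then show ?thesis using pick(3)[OF gsK qK[of n]] q_def by simp
  qed
  have q0: "q n \<noteq> 0" for n
  proof
    assume "q n = 0"
    then show False using qn[of n] s_idealD(2)[OF s_span_ideal[OF P]] gsK KP by (metis subset_trans)
  qed
  define \<Lambda> where "\<Lambda> n = s_span S (map (\<lambda>i. lead_coeff (q i)) [0..<n])" for n
  have lcS: "lead_coeff (q i) \<in> S" for i using qP[of i] unfolding polys_def by blast
  have \<Lambda>: "s_ideal S (\<Lambda> n)" for n unfolding \<Lambda>_def by (rule s_span_ideal[OF S]) (auto simp: lcS)
  have \<Lambda>mono: "\<Lambda> n \<subseteq> \<Lambda> m" if "n \<le> m" for n m
  proof -
    have "[0..<m] = [0..<n] @ [n..<m]" using that upt_add_eq_append[of 0 n "m-n"] by simp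
    then have "map (\<lambda>i. lead_coeff (q i)) [0..<m] = map (\<lambda>i. lead_coeff (q i)) [0..<n] @ map (\<lambda>i. lead_coeff (q i)) [n..<m]"
      by simp
    then show ?thesis unfolding \<Lambda>_def using s_span_prefix[OF S] by metis
  qed
  have in_next: "lead_coeff (q n) \<in> \<Lambda> (Suc n)" for n
    unfolding \<Lambda>_def by (rule s_span_mem[OF S]) simp
  have not_in: "lead_coeff (q n) \<notin> \<Lambda> n" for n
  proof
    assume "lead_coeff (q n) \<in> \<Lambda> n"
    then obtain c where c: "lead_coeff (q n) = (\<Sum>i<n. c i * lead_coeff (q i))" "\<forall>i<n. c i \<in> S"
      unfolding \<Lambda>_def s_span_def by auto
    define dn where "dn = degree (q n)"
    define t where "t i = monom (c i) (dn - degree (q i)) * q i" for i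
    define r where "r = q n - (\<Sum>i<n. t i)"
    have tK: "t i \<in> K" if "i < n" for i
      unfolding t_def using c(2) that by (intro s_idealD(4)[OF K] monom_polys[OF _ S] qK) auto
    have tspan: "t i \<in> s_span ?P (gs n)" if "i < n" for i
    proof -
      have "q i \<in> set (gs n)" using that by (simp add: gs_map)
      then have "q i \<in> s_span ?P (gs n)" by (rule s_span_mem[OF P])
      then show ?thesis unfolding t_def using c(2) that
        by (intro s_idealD(4)[OF s_span_ideal[OF P]] monom_polys[OF _ S]) (use gsK KP in auto)
    qed
    have rK: "r \<in> K" unfolding r_def
      by (rule s_ideal_diff[OF P K qK s_ideal_sum[OF K]]) (use tK in auto)
    have r_notin: "r \<notin> s_span ?P (gs n)"
    proof
      assume "r \<in> s_span ?P (gs n)"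
      moreover have "(\<Sum>i<n. t i) \<in> s_span ?P (gs n)"
        by (rule s_ideal_sum[OF s_span_ideal[OF P]]) (use tspan gsK KP in auto)
      ultimately have "r + (\<Sum>i<n. t i) \<in> s_span ?P (gs n)"
        using s_idealD(3)[OF s_span_ideal[OF P]] gsK KP by (metis subset_trans)
      then show False using qn[of n] unfolding r_def by simp
    qed
    have r0: "r \<noteq> 0" using r_notin s_idealD(2)[OF s_span_ideal[OF P]] gsK KP by (metis subset_trans)
    have degt: "degree (t i) \<le> dn" if "i < n" for i
    proof -
      have "degree (t i) \<le> degree (monom (c i) (dn - degree (q i))) + degree (q i)"
        unfolding t_def by (rule degree_mult_le)
      also have "\<dots> \<le> (dn - degree (q i)) + degree (q i)" using degree_monom_le by simp
      also have "\<dots> = dn" using deg_mono[OF that] dn_def by simp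
      finally show ?thesis .
    qed
    have "degree (q n) \<le> dn" by (simp add: dn_def)
    moreover have "degree (\<Sum>i<n. t i) \<le> dn" by (rule degree_sum_le) (auto intro: degt)
    ultimately have degr: "degree r \<le> dn" unfolding r_def by (rule degree_diff_le)
    have coeff_t: "coeff (t i) dn = c i * lead_coeff (q i)" if "i < n" for i
      unfolding t_def coeff_monom_mult using deg_mono[OF that] dn_def by simp
    have "(\<Sum>i<n. coeff (t i) dn) = (\<Sum>i<n. c i * lead_coeff (q i))"
      by (rule sum.cong) (simp_all add: coeff_t)
    then have "coeff r dn = lead_coeff (q n) - (\<Sum>i<n. c i * lead_coeff (q i))"
      unfolding r_def by (simp add: coeff_sum dn_def)
    then have "coeff r dn = 0" using c(1) by simp
    then have "degree r < degree (q n)" using degree_less_aux[OF degr _ r0] dn_def by simp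
    moreover have "degree (q n) \<le> degree r" using pick(3)[OF gsK rK] r_notin q_def by simp
    ultimately show False by simp
  qed
  obtain n where "\<Lambda> (Suc n) \<subseteq> \<Lambda> n" using s_noeth_acc[OF S N \<Lambda> \<Lambda>mono] by blast
  then show False using in_next not_in by blast
qed

definition adjoin :: "'b::comm_ring_1 set \<Rightarrow> 'b \<Rightarrow> 'b set" where
  "adjoin S b = {poly p b | p. p \<in> polys S}"

lemma adjoin_subring:
  assumes S: "subring S"
  shows "subring (adjoin S b)"
proof -
  have P: "subring (polys S)" by (rule polys_subring[OF S])
  show ?thesis unfolding subring_def adjoin_def
  proof (intro conjI ballI)
    show "0 \<in> {poly p b |p. p \<in> polys S}" using subringD(1)[OF P] by (auto intro!: exI[of _ 0])
    show "1 \<in> {poly p b |p. p \<in> polys S}" using subringD(2)[OF P] by (auto intro!: exI[of _ 1])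
    fix x y assume "x \<in> {poly p b |p. p \<in> polys S}" "y \<in> {poly p b |p. p \<in> polys S}"
    then obtain p q where "x = poly p b" "y = poly q b" "p \<in> polys S" "q \<in> polys S" by blast
    then have "x + y = poly (p + q) b" "p + q \<in> polys S" "x * y = poly (p * q) b" "p * q \<in> polys S"
      using subringD(3,4)[OF P] by auto
    then show "x + y \<in> {poly p b |p. p \<in> polys S}" "x * y \<in> {poly p b |p. p \<in> polys S}"
      by blast+
  next
    fix x assume "x \<in> {poly p b |p. p \<in> polys S}"
    then obtain p where "x = poly p b" "p \<in> polys S" by blast
    then show "- x \<in> {poly p b |p. p \<in> polys S}" using subringD(5)[OF P] by (auto intro!: exI[of _ "- p"])
  qed
qed

lemma adjoin_base: "subring S \<Longrightarrow> s \<in> S \<Longrightarrow> s \<in> adjoin S b"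
  unfolding adjoin_def using monom_polys[of s S 0] by (auto intro!: exI[of _ "monom s 0"] simp: poly_monom)

lemma adjoin_gen: "subring S \<Longrightarrow> b \<in> adjoin S b"
proof -
  assume S: "subring S"
  have "monom 1 1 \<in> polys S" using monom_polys[of 1 S 1] subringD(2)[OF S] S by blast
  moreover have "poly (monom 1 1) b = b" by (simp add: poly_monom)
  ultimately show ?thesis unfolding adjoin_def by (metis (mono_tags, lifting) mem_Collect_eq)
qed

lemma adjoin_noeth:
  assumes S: "subring S" and N: "s_noeth S"
  shows "s_noeth (adjoin S b)"
  unfolding s_noeth_def
proof (intro allI impI)
  fix K assume K: "s_ideal (adjoin S b) K"
  let ?P = "polys S"
  have P: "subring ?P" by (rule polys_subring[OF S])
  let ?K' = "{p \<in> ?P. poly p b \<in> K}"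
  have K': "s_ideal ?P ?K'" unfolding s_ideal_def
  proof (intro conjI ballI)
    show "?K' \<subseteq> ?P" by blast
    show "0 \<in> ?K'" using subringD(1)[OF P] s_idealD(2)[OF K] by simp
    fix x y assume "x \<in> ?K'" "y \<in> ?K'"
    then show "x + y \<in> ?K'" using subringD(3)[OF P] s_idealD(3)[OF K] by auto
  next
    fix r x assume r: "r \<in> ?P" and x: "x \<in> ?K'"
    have "poly r b \<in> adjoin S b" using r unfolding adjoin_def by blast
    then show "r * x \<in> ?K'" using x r subringD(4)[OF P] s_idealD(4)[OF K] by auto
  qed
  obtain xs where xs: "set xs \<subseteq> ?K'" "?K' = s_span ?P xs"
    using hilbert_basis[OF S N] K' unfolding s_noeth_def by blast
  let ?ys = "map (\<lambda>p. poly p b) xs"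
  have ysK: "set ?ys \<subseteq> K" using xs(1) by auto
  have "K \<subseteq> s_span (adjoin S b) ?ys"
  proof
    fix k assume k: "k \<in> K"
    then have "k \<in> adjoin S b" using s_idealD(1)[OF K] by blast
    then obtain p where p: "k = poly p b" "p \<in> ?P" unfolding adjoin_def by blast
    then have "p \<in> s_span ?P xs" using xs(2) k by blast
    then obtain c where c: "p = (\<Sum>i<length xs. c i * xs ! i)" "\<forall>i<length xs. c i \<in> ?P"
      unfolding s_span_def by blast
    have "k = (\<Sum>i<length ?ys. poly (c i) b * ?ys ! i)" using p c by (simp add: poly_sum)
    moreover have "\<forall>i<length ?ys. poly (c i) b \<in> adjoin S b" using c(2) unfolding adjoin_def by auto
    ultimately show "k \<in> s_span (adjoin S b) ?ys" unfolding s_span_def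
      by (intro CollectI exI[of _ "\<lambda>i. poly (c i) b"]) blast
  qed
  moreover have "s_span (adjoin S b) ?ys \<subseteq> K" by (rule s_span_least[OF K ysK])
  ultimately show "\<exists>xs. set xs \<subseteq> K \<and> K = s_span (adjoin S b) xs" using ysK by blast
qed



lemma zero_mem_pow [simp]: "0 \<in> ideal_pow J n" by (rule ideal_0[OF ideal_pow_ideal])
lemma zero_mem_prod [simp]: "0 \<in> ideal_prod A B" by (rule ideal_0[OF ideal_prod_ideal])

definition consts_ring :: "'a::comm_ring_1 poly set" where
  "consts_ring = range (\<lambda>c. monom c 0)"

lemma consts_ring_mem: "monom c 0 \<in> consts_ring"
  unfolding consts_ring_def by (rule rangeI)

lemma consts_ring_cases: "x \<in> consts_ring \<Longrightarrow> (\<And>c. x = monom c 0 \<Longrightarrow> P) \<Longrightarrow> P"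
  unfolding consts_ring_def by blast

lemma consts_ring_subring: "subring (consts_ring :: 'a::comm_ring_1 poly set)"
  unfolding subring_def
proof (intro conjI ballI)
  show "0 \<in> (consts_ring :: 'a poly set)" using consts_ring_mem[of "0::'a"] by simp
  show "1 \<in> (consts_ring :: 'a poly set)" using consts_ring_mem[of "1::'a"] by (simp add: monom_0 one_pCons)
  fix x y :: "'a poly" assume x: "x \<in> consts_ring" and y: "y \<in> consts_ring"
  obtain a where a: "x = monom a 0" using x by (rule consts_ring_cases)
  obtain b where b: "y = monom b 0" using y by (rule consts_ring_cases)
  have "x + y = monom (a + b) 0" unfolding a b by (simp add: add_monom)
  then show "x + y \<in> consts_ring" using consts_ring_mem by simp
  have "x * y = monom (a * b) 0" unfolding a b by (simp add: mult_monom)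
  then show "x * y \<in> consts_ring" using consts_ring_mem by simp
next
  fix x :: "'a poly" assume x: "x \<in> consts_ring"
  obtain a where a: "x = monom a 0" using x by (rule consts_ring_cases)
  have "- x = monom (- a) 0" unfolding a by (simp add: minus_monom)
  then show "- x \<in> consts_ring" using consts_ring_mem by simp
qed

lemma consts_ring_noeth:
  assumes N: "noetherian_ring TYPE('a::comm_ring_1)"
  shows "s_noeth (consts_ring :: 'a poly set)"
  unfolding s_noeth_def
proof (intro allI impI)
  fix K :: "'a poly set" assume K: "s_ideal consts_ring K"
  let ?K0 = "{c. monom c 0 \<in> K}"
  have K0: "is_ideal ?K0"
  proof (rule is_idealI)
    show "0 \<in> ?K0" using s_idealD(2)[OF K] by simp
    fix x y :: 'a assume "x \<in> ?K0" "y \<in> ?K0"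
    then have "monom x 0 + monom y 0 \<in> K" by (simp add: s_idealD(3)[OF K])
    then show "x + y \<in> ?K0" by (simp add: add_monom)
  next
    fix r x :: 'a assume "x \<in> ?K0"
    moreover have "monom r 0 \<in> consts_ring" unfolding consts_ring_def by blast
    ultimately have "monom r 0 * monom x 0 \<in> K" using s_idealD(4)[OF K] by simp
    then show "r * x \<in> ?K0" by (simp add: mult_monom)
  qed
  obtain S where S: "finite S" "?K0 = ideal_gen S" using N K0 unfolding noetherian_ring_def by blast
  obtain xs where xs: "set xs = S" using finite_list[OF S(1)] by blast
  have K0xs: "?K0 = lspan xs" using S xs ideal_gen_list by metis
  let ?ys = "map (\<lambda>c. monom c 0) xs"
  have ysK: "set ?ys \<subseteq> K"
  proof
    fix y assume "y \<in> set ?ys"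
    then obtain c where "c \<in> set xs" "y = monom c 0" by auto
    then have "c \<in> ?K0" using ideal_gen_sub S(2) xs by blast
    then show "y \<in> K" using \<open>y = _\<close> by simp
  qed
  have "K \<subseteq> s_span consts_ring ?ys"
  proof
    fix k assume k: "k \<in> K"
    then have "k \<in> consts_ring" using s_idealD(1)[OF K] by blast
    then obtain c where c: "k = monom c 0" unfolding consts_ring_def by blast
    then have "c \<in> lspan xs" using K0xs k by blast
    then obtain d where d: "c = (\<Sum>i<length xs. d i * xs ! i)" unfolding lspan_def by blast
    have "k = (\<Sum>i<length xs. monom (d i) 0 * monom (xs ! i) 0)"
      unfolding c d monom_sum by (simp add: mult_monom)
    then have "k = (\<Sum>i<length ?ys. monom (d i) 0 * ?ys ! i)" by simp
    moreover have "\<forall>i<length ?ys. monom (d i) 0 \<in> consts_ring" unfolding consts_ring_def by blast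
    ultimately show "k \<in> s_span consts_ring ?ys" unfolding s_span_def
      by (intro CollectI exI[of _ "\<lambda>i. monom (d i) 0"]) blast
  qed
  moreover have "s_span consts_ring ?ys \<subseteq> K" by (rule s_span_least[OF K ysK])
  ultimately show "\<exists>xs. set xs \<subseteq> K \<and> K = s_span consts_ring xs" using ysK by blast
qed

primrec rees_alg :: "'a::comm_ring_1 list \<Rightarrow> 'a poly set" where
  "rees_alg [] = consts_ring"
| "rees_alg (a # as) = adjoin (rees_alg as) (monom a 1)"

lemma rees_alg_subring: "subring (rees_alg as)"
  by (induction as) (simp_all add: consts_ring_subring adjoin_subring)

lemma rees_alg_noeth: "noetherian_ring TYPE('a::comm_ring_1) \<Longrightarrow> s_noeth (rees_alg (as :: 'a list))"
  by (induction as) (simp_all add: consts_ring_noeth adjoin_noeth rees_alg_subring)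

lemma rees_alg_consts: "consts_ring \<subseteq> rees_alg as"
proof (induction as)
  case (Cons a as)
  then show ?case using adjoin_base[OF rees_alg_subring, of _ as "monom a 1"] by auto
qed simp

lemma rees_alg_gens: "a \<in> set as \<Longrightarrow> monom a 1 \<in> rees_alg as"
proof (induction as)
  case (Cons b as)
  show ?case
  proof (cases "a = b")
    case True
    then show ?thesis using adjoin_gen[OF rees_alg_subring] by simp
  next
    case False
    then have "monom a 1 \<in> rees_alg as" using Cons by simp
    then show ?thesis using adjoin_base[OF rees_alg_subring] by simp
  qed
qed simp

lemma subring_pow: "subring Q \<Longrightarrow> b \<in> Q \<Longrightarrow> b ^ n \<in> Q"
  by (induction n) (simp_all add: subringD(2) subringD(4))

lemma adjoin_sub:
  assumes Q: "subring Q" and SQ: "S \<subseteq> Q" and b: "b \<in> Q"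
  shows "adjoin S b \<subseteq> Q"
proof
  fix x assume "x \<in> adjoin S b"
  then obtain p where p: "x = poly p b" "p \<in> polys S" unfolding adjoin_def by blast
  have "x = (\<Sum>i\<le>degree p. coeff p i * b ^ i)" using p(1) by (simp add: poly_altdef)
  also have "\<dots> \<in> Q"
  proof (rule subring_sum[OF Q])
    fix i
    have "coeff p i \<in> Q" using p(2) SQ unfolding polys_def by blast
    then show "coeff p i * b ^ i \<in> Q" using subring_pow[OF Q b] subringD(4)[OF Q] by blast
  qed
  finally show "x \<in> Q" .
qed

lemma rees_alg_sub:
  assumes Q: "subring Q" "consts_ring \<subseteq> Q" "\<And>a. a \<in> set as \<Longrightarrow> monom a 1 \<in> Q"
  shows "rees_alg as \<subseteq> Q"
  using assms(3)
proof (induction as)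
  case Nil then show ?case using Q by simp
next
  case (Cons a as)
  then show ?case using adjoin_sub[OF Q(1), of "rees_alg as" "monom a 1"] by simp
qed

definition rees :: "'a::comm_ring_1 set \<Rightarrow> 'a poly set" where
  "rees J = {p. \<forall>n. coeff p n \<in> ideal_pow J n}"

lemma rees_subring:
  assumes J: "is_ideal (J::'a::comm_ring_1 set)"
  shows "subring (rees J)"
proof -
  have 0: "0 \<in> rees J" unfolding rees_def by (simp add: ideal_0[OF ideal_pow_ideal])
  have 1: "1 \<in> rees J" unfolding rees_def mem_Collect_eq
  proof (rule allI)
    fix n show "coeff 1 n \<in> ideal_pow J n" by (cases n) (simp_all add: ideal_0[OF ideal_pow_ideal])
  qed
  have add: "x + y \<in> rees J" if "x \<in> rees J" "y \<in> rees J" for x y :: "'a poly"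
    unfolding rees_def mem_Collect_eq
  proof (rule allI)
    fix n have "coeff x n \<in> ideal_pow J n" "coeff y n \<in> ideal_pow J n" using that unfolding rees_def by blast+
    then show "coeff (x + y) n \<in> ideal_pow J n" using ideal_add[OF ideal_pow_ideal] by simp
  qed
  have mul: "x * y \<in> rees J" if "x \<in> rees J" "y \<in> rees J" for x y :: "'a poly"
    unfolding rees_def mem_Collect_eq
  proof (rule allI)
    fix n
    have "(\<Sum>i\<le>n. coeff x i * coeff y (n - i)) \<in> ideal_pow J n"
    proof (rule ideal_sum_mem[OF ideal_pow_ideal])
      fix i assume "i \<in> {..n}"
      have "coeff x i \<in> ideal_pow J i" "coeff y (n - i) \<in> ideal_pow J (n - i)" using that unfolding rees_def by blast+
      then have "coeff x i * coeff y (n - i) \<in> ideal_pow J (i + (n - i))" by (rule ideal_pow_mult[OF J])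
      then show "coeff x i * coeff y (n - i) \<in> ideal_pow J n" using \<open>i \<in> {..n}\<close> by simp
    qed
    then show "coeff (x * y) n \<in> ideal_pow J n" by (simp add: coeff_mult)
  qed
  have neg: "- x \<in> rees J" if "x \<in> rees J" for x :: "'a poly"
    unfolding rees_def mem_Collect_eq
  proof (rule allI)
    fix n have "coeff x n \<in> ideal_pow J n" using that unfolding rees_def by blast
    then show "coeff (- x) n \<in> ideal_pow J n" using ideal_uminus[OF ideal_pow_ideal] by simp
  qed
  show ?thesis unfolding subring_def using 0 1 add mul neg by blast
qed

lemma rees_alg_eq:
  assumes J: "J = ideal_gen (set (as::'a::comm_ring_1 list))"
  shows "rees_alg as = rees J"
proof
  have Jid: "is_ideal J" using J ideal_gen_ideal by simp
  show "rees_alg as \<subseteq> rees J"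
  proof (rule rees_alg_sub[OF rees_subring[OF Jid]])
    show "consts_ring \<subseteq> rees J"
    proof
      fix x :: "'a poly" assume "x \<in> consts_ring"
      then obtain c where c: "x = monom c 0" unfolding consts_ring_def by blast
      show "x \<in> rees J" unfolding rees_def mem_Collect_eq c
      proof (rule allI)
        fix n show "coeff (monom c 0) n \<in> ideal_pow J n" by (cases n) (simp_all add: ideal_0[OF ideal_pow_ideal])
      qed
    qed
    fix a assume "a \<in> set as"
    then have a: "a \<in> J" using J ideal_gen_sub by blast
    show "monom a 1 \<in> rees J" unfolding rees_def mem_Collect_eq
    proof (rule allI)
      fix n show "coeff (monom a 1) n \<in> ideal_pow J n"
        using a ideal_pow_1[OF Jid] by (cases "n = 1") (simp_all add: ideal_0[OF ideal_pow_ideal])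
    qed
  qed
  let ?B = "rees_alg as"
  have B: "subring ?B" by (rule rees_alg_subring)
  define X where "X n = {c. monom c n \<in> ?B}" for n
  have X: "is_ideal (X n)" for n
  proof (rule is_idealI)
    show "0 \<in> X n" unfolding X_def using subringD(1)[OF B] by simp
    fix x y :: 'a assume "x \<in> X n" "y \<in> X n"
    then have "monom x n + monom y n \<in> ?B" unfolding X_def using subringD(3)[OF B] by blast
    then show "x + y \<in> X n" unfolding X_def by (simp add: add_monom)
  next
    fix r x :: 'a assume "x \<in> X n"
    moreover have "monom r 0 \<in> ?B" using rees_alg_consts unfolding consts_ring_def by blast
    ultimately have "monom r 0 * monom x n \<in> ?B" unfolding X_def using subringD(4)[OF B] by blast
    then show "r * x \<in> X n" unfolding X_def by (simp add: mult_monom)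
  qed
  have "set as \<subseteq> X 1" unfolding X_def using rees_alg_gens by blast
  then have JX1: "J \<subseteq> X 1" unfolding J by (rule ideal_gen_least[OF X])
  have powX: "ideal_pow J n \<subseteq> X n" for n
  proof (induction n)
    case 0
    show ?case
    proof
      fix c :: 'a show "c \<in> X 0" unfolding X_def using rees_alg_consts unfolding consts_ring_def by blast
    qed
  next
    case (Suc n)
    show ?case unfolding ideal_pow.simps
    proof (rule ideal_prod_least[OF X])
      fix a b :: 'a assume "a \<in> J" "b \<in> ideal_pow J n"
      then have "monom a 1 \<in> ?B" "monom b n \<in> ?B" using JX1 Suc unfolding X_def by blast+
      then have "monom a 1 * monom b n \<in> ?B" by (rule subringD(4)[OF B])
      then show "a * b \<in> X (Suc n)" unfolding X_def by (simp add: mult_monom)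
    qed
  qed
  show "rees J \<subseteq> rees_alg as"
  proof
    fix p assume p: "p \<in> rees J"
    have "(\<Sum>i\<le>degree p. monom (coeff p i) i) \<in> ?B"
    proof (rule subring_sum[OF B])
      fix i have "coeff p i \<in> ideal_pow J i" using p unfolding rees_def by blast
      then show "monom (coeff p i) i \<in> ?B" using powX unfolding X_def by blast
    qed
    then show "p \<in> ?B" by (simp add: poly_as_sum_of_monoms)
  qed
qed

theorem artin_rees:
  assumes N: "noetherian_ring TYPE('a::comm_ring_1)" and J: "is_ideal (J::'a set)" and I: "is_ideal I"
  shows "\<exists>c. \<forall>n\<ge>c. ideal_pow J n \<inter> I = ideal_prod (ideal_pow J (n - c)) (ideal_pow J c \<inter> I)"
proof -
  obtain S where S: "finite S" "J = ideal_gen S" using N J unfolding noetherian_ring_def by blast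
  obtain as where as: "set as = S" using finite_list[OF S(1)] by blast
  have Jas: "J = ideal_gen (set as)" using S as by simp
  let ?B = "rees_alg as"
  have B: "subring ?B" by (rule rees_alg_subring)
  have BJ: "?B = rees J" by (rule rees_alg_eq[OF Jas])
  define M where "M = {p \<in> ?B. \<forall>n. coeff p n \<in> I}"
  have M: "s_ideal ?B M" unfolding s_ideal_def
  proof (intro conjI ballI)
    show "M \<subseteq> ?B" unfolding M_def by blast
    show "0 \<in> M" unfolding M_def using subringD(1)[OF B] ideal_0[OF I] by simp
    fix x y assume "x \<in> M" "y \<in> M"
    then show "x + y \<in> M" unfolding M_def using subringD(3)[OF B] ideal_add[OF I] by simp
  next
    fix r x assume r: "r \<in> ?B" and x: "x \<in> M"
    have "\<forall>n. coeff (r * x) n \<in> I"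
    proof
      fix n
      have "(\<Sum>i\<le>n. coeff r i * coeff x (n - i)) \<in> I"
      proof (rule ideal_sum_mem[OF I])
        fix i have "coeff x (n - i) \<in> I" using x unfolding M_def by blast
        then show "coeff r i * coeff x (n - i) \<in> I" by (rule ideal_mult[OF I])
      qed
      then show "coeff (r * x) n \<in> I" by (simp add: coeff_mult)
    qed
    moreover have "r * x \<in> ?B" using r x subringD(4)[OF B] unfolding M_def by blast
    ultimately show "r * x \<in> M" unfolding M_def by blast
  qed
  obtain gs where gs: "set gs \<subseteq> M" "M = s_span ?B gs"
    using rees_alg_noeth[OF N, of as, unfolded s_noeth_def, rule_format, OF M] by blast
  define c where "c = Max (insert 0 (degree ` set gs))"
  have degc: "degree g \<le> c" if "g \<in> set gs" for g unfolding c_def using that by simp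
  have gsJI: "coeff g k \<in> ideal_pow J k \<inter> I" if "g \<in> set gs" for g k
    using gs(1) that BJ unfolding M_def rees_def by blast
  show ?thesis
  proof (intro exI[of _ c] allI impI)
    fix n assume nc: "n \<ge> c"
    let ?P = "ideal_prod (ideal_pow J (n - c)) (ideal_pow J c \<inter> I)"
    have P: "is_ideal ?P" by (rule ideal_prod_ideal)
    show "ideal_pow J n \<inter> I = ?P"
    proof
      show "?P \<subseteq> ideal_pow J n \<inter> I"
      proof (rule ideal_prod_least[OF ideal_Int[OF ideal_pow_ideal I]])
        fix a b assume a: "a \<in> ideal_pow J (n - c)" and b: "b \<in> ideal_pow J c \<inter> I"
        have "a * b \<in> ideal_pow J (n - c + c)" using ideal_pow_mult[OF J a] b by blast
        moreover have "a * b \<in> I" using b ideal_mult[OF I] by blast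
        ultimately show "a * b \<in> ideal_pow J n \<inter> I" using nc by simp
      qed
      show "ideal_pow J n \<inter> I \<subseteq> ?P"
      proof
        fix x assume x: "x \<in> ideal_pow J n \<inter> I"
        have "monom x n \<in> rees J" unfolding rees_def mem_Collect_eq
        proof (rule allI)
          fix k show "coeff (monom x n) k \<in> ideal_pow J k" using x by (cases "n = k") auto
        qed
        moreover have "\<forall>k. coeff (monom x n) k \<in> I" using x by (simp add: ideal_0[OF I])
        ultimately have "monom x n \<in> M" unfolding M_def BJ by blast
        then obtain h where h: "monom x n = (\<Sum>j<length gs. h j * gs ! j)" "\<forall>j<length gs. h j \<in> ?B"
          using gs(2) unfolding s_span_def by blast
        have key: "u * v \<in> ?P" if u: "u \<in> ideal_pow J i" and v: "v \<in> ideal_pow J k \<inter> I"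
          and ik: "i + k = n" and kc: "k \<le> c" for u v i k
        proof -
          have "ideal_pow J ((n - c) + (c - k)) \<subseteq> ideal_colon ?P v"
          proof (rule ideal_pow_split[OF ideal_colon_ideal[OF P]])
            fix u1 u2 assume u1: "u1 \<in> ideal_pow J (n - c)" and u2: "u2 \<in> ideal_pow J (c - k)"
            have "u2 * v \<in> ideal_pow J (c - k + k)" using ideal_pow_mult[OF J u2] v by blast
            then have "u2 * v \<in> ideal_pow J c \<inter> I" using kc v ideal_mult[OF I] by simp
            then have "u1 * (u2 * v) \<in> ?P" using u1 ideal_prod_memI by blast
            then show "u1 * u2 \<in> ideal_colon ?P v" unfolding ideal_colon_def by (simp add: mult.assoc)
          qed
          moreover have "(n - c) + (c - k) = i" using ik kc nc by simp
          ultimately show ?thesis using u unfolding ideal_colon_def by auto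
        qed
        have "x = coeff (monom x n) n" by simp
        also have "\<dots> = (\<Sum>j<length gs. \<Sum>i\<le>n. coeff (h j) i * coeff (gs ! j) (n - i))"
          unfolding h by (simp add: coeff_sum coeff_mult)
        also have "\<dots> \<in> ?P"
        proof (rule ideal_sum_mem[OF P], rule ideal_sum_mem[OF P])
          fix j i assume j: "j \<in> {..<length gs}" and i: "i \<in> {..n}"
          have g: "gs ! j \<in> set gs" using j by simp
          show "coeff (h j) i * coeff (gs ! j) (n - i) \<in> ?P"
          proof (cases "n - i \<le> degree (gs ! j)")
            case True
            have "coeff (h j) i \<in> ideal_pow J i" using h(2) j BJ unfolding rees_def by blast
            moreover have "coeff (gs ! j) (n - i) \<in> ideal_pow J (n - i) \<inter> I" by (rule gsJI[OF g])
            moreover have "n - i \<le> c" using True degc[OF g] by simp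
            ultimately show ?thesis using key[of _ i _ "n - i"] i by simp
          next
            case False
            then have "coeff (gs ! j) (n - i) = 0" by (simp add: coeff_eq_0)
            then show ?thesis using ideal_0[OF P] by simp
          qed
        qed
        finally show "x \<in> ?P" .
      qed
    qed
  qed
qed



lemma coset_eq_iff:
  assumes K: "is_ideal K"
  shows "coset x K = coset y K \<longleftrightarrow> x - y \<in> K"
proof
  assume eq: "coset x K = coset y K"
  have "x \<in> coset x K" unfolding coset_def using ideal_0[OF K] by (intro CollectI exI[of _ 0]) simp
  then have "x \<in> coset y K" using eq by simp
  then obtain k where "k \<in> K" "x = y + k" unfolding coset_def by blast
  then show "x - y \<in> K" by simp
next
  assume d: "x - y \<in> K"
  have "coset x K \<subseteq> coset y K" if d: "x - y \<in> K" for x y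
  proof
    fix z assume "z \<in> coset x K"
    then obtain k where k: "k \<in> K" "z = x + k" unfolding coset_def by blast
    then have "z = y + ((x - y) + k)" "(x - y) + k \<in> K" using ideal_add[OF K d k(1)] by simp_all
    then show "z \<in> coset y K" unfolding coset_def by blast
  qed
  moreover have "y - x \<in> K" using ideal_uminus[OF K d] by simp
  ultimately show "coset x K = coset y K" using d by blast
qed

definition Asum :: "'a::comm_ring_1 set \<Rightarrow> 'a set \<Rightarrow> nat \<Rightarrow> 'a set" where
  "Asum J I n = ideal_sum (ideal_pow J n) I"

lemma Asum_ideal: "is_ideal I \<Longrightarrow> is_ideal (Asum J I n)"
  unfolding Asum_def by (rule ideal_sum_ideal[OF ideal_pow_ideal])

lemma Asum_pow: "is_ideal I \<Longrightarrow> ideal_pow J n \<subseteq> Asum J I n"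
  unfolding Asum_def by (rule ideal_sum_left)

lemma Asum_I: "is_ideal I \<Longrightarrow> I \<subseteq> Asum J I n"
  unfolding Asum_def by (rule ideal_sum_right[OF ideal_pow_ideal])

lemma Asum_mult:
  assumes J: "is_ideal J" and I: "is_ideal I" and a: "a \<in> Asum J I n" and b: "b \<in> Asum J I m"
  shows "a * b \<in> Asum J I (n + m)"
proof -
  obtain u i where u: "u \<in> ideal_pow J n" "i \<in> I" "a = u + i" using a unfolding Asum_def by (rule ideal_sum_memE)
  obtain v i2 where v: "v \<in> ideal_pow J m" "i2 \<in> I" "b = v + i2" using b unfolding Asum_def by (rule ideal_sum_memE)
  have "a * b = u * v + (u * i2 + i * b)" using u(3) v(3) by (simp add: algebra_simps)
  moreover have "u * v \<in> ideal_pow J (n + m)" by (rule ideal_pow_mult[OF J u(1) v(1)])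
  moreover have "u * i2 + i * b \<in> I" using ideal_add[OF I ideal_mult[OF I v(2)] ideal_mult2[OF I u(2)]] .
  ultimately show ?thesis unfolding Asum_def using ideal_sum_memI by metis
qed

lemma Asum_Suc_sub: "is_ideal J \<Longrightarrow> Asum J I (Suc n) \<subseteq> Asum J I n"
  unfolding Asum_def by (rule ideal_sum_mono[OF ideal_pow_Suc_sub]) auto

lemma Asum_rep:
  assumes I: "is_ideal I" and x: "x \<in> Asum J I n"
  shows "\<exists>j\<in>ideal_pow J n. x - j \<in> Asum J I (Suc n)"
proof -
  obtain j i where "j \<in> ideal_pow J n" "i \<in> I" "x = j + i" using x unfolding Asum_def by (rule ideal_sum_memE)
  then show ?thesis using Asum_I[OF I, of J "Suc n"] by (intro bexI[of _ j]) auto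
qed

lemma gr_class_Asum: "gr_class J I n x = coset x (Asum J I (Suc n))"
  unfolding gr_class_def Asum_def ..

lemma gr_comp_Asum: "gr_comp J I n = gr_class J I n ` Asum J I n"
  unfolding gr_comp_def Asum_def ..

lemma gr_iso_crit:
  assumes J: "is_ideal J" and I: "is_ideal I" and I': "is_ideal I'"
    and eq: "\<And>n j. j \<in> ideal_pow J n \<Longrightarrow> j \<in> Asum J I (Suc n) \<longleftrightarrow> j \<in> Asum J I' (Suc n)"
  shows "gr_iso J I I'"
proof -
  let ?A = "Asum J I" and ?B = "Asum J I'"
  have cA: "gr_class J I n x = gr_class J I n y \<longleftrightarrow> x - y \<in> ?A (Suc n)" for n x y
    unfolding gr_class_Asum by (rule coset_eq_iff[OF Asum_ideal[OF I]])
  have cB: "gr_class J I' n x = gr_class J I' n y \<longleftrightarrow> x - y \<in> ?B (Suc n)" for n x y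
    unfolding gr_class_Asum by (rule coset_eq_iff[OF Asum_ideal[OF I']])
  define \<phi> where "\<phi> n X = gr_class J I' n (SOME j. j \<in> ideal_pow J n \<and> X = gr_class J I n j)" for n X
  have Phi: "\<phi> n (gr_class J I n x) = gr_class J I' n j"
    if x: "x \<in> ?A n" and j: "j \<in> ideal_pow J n" and xj: "x - j \<in> ?A (Suc n)" for n x j
  proof -
    let ?P = "\<lambda>j. j \<in> ideal_pow J n \<and> gr_class J I n x = gr_class J I n j"
    have "?P j" using j xj cA by blast
    then have P0: "?P (SOME j. ?P j)" by (rule someI)
    define j0 where "j0 = (SOME j. ?P j)"
    have j0: "j0 \<in> ideal_pow J n" "gr_class J I n j = gr_class J I n j0" using P0 \<open>?P j\<close> unfolding j0_def by auto
    then have "j - j0 \<in> ?A (Suc n)" using cA by blast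
    moreover have "j - j0 \<in> ideal_pow J n" using ideal_diff[OF ideal_pow_ideal j j0(1)] .
    ultimately have "j - j0 \<in> ?B (Suc n)" using eq by blast
    then have "gr_class J I' n j = gr_class J I' n j0" using cB by blast
    then show ?thesis unfolding \<phi>_def j0_def by simp
  qed
  have bij: "bij_betw (\<phi> n) (gr_comp J I n) (gr_comp J I' n)" for n
    unfolding bij_betw_def
  proof
    show "inj_on (\<phi> n) (gr_comp J I n)"
    proof (rule inj_onI)
      fix X Y assume X: "X \<in> gr_comp J I n" and Y: "Y \<in> gr_comp J I n" and XY: "\<phi> n X = \<phi> n Y"
      obtain x where x: "x \<in> ?A n" "X = gr_class J I n x" using X unfolding gr_comp_Asum by blast
      obtain y where y: "y \<in> ?A n" "Y = gr_class J I n y" using Y unfolding gr_comp_Asum by blast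
      obtain j where j: "j \<in> ideal_pow J n" "x - j \<in> ?A (Suc n)" using Asum_rep[OF I x(1)] by blast
      obtain k where k: "k \<in> ideal_pow J n" "y - k \<in> ?A (Suc n)" using Asum_rep[OF I y(1)] by blast
      have "gr_class J I' n j = gr_class J I' n k" using XY Phi[OF x(1) j] Phi[OF y(1) k] x y by simp
      then have "j - k \<in> ?B (Suc n)" using cB by blast
      moreover have "j - k \<in> ideal_pow J n" using ideal_diff[OF ideal_pow_ideal j(1) k(1)] .
      ultimately have "j - k \<in> ?A (Suc n)" using eq by blast
      then have "(x - j) + (j - k) - (y - k) \<in> ?A (Suc n)"
        using ideal_diff[OF Asum_ideal[OF I] ideal_add[OF Asum_ideal[OF I] j(2)] k(2)] by blast
      then have "x - y \<in> ?A (Suc n)" by simp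
      then show "X = Y" using x y cA by blast
    qed
    show "\<phi> n ` gr_comp J I n = gr_comp J I' n"
    proof
      show "\<phi> n ` gr_comp J I n \<subseteq> gr_comp J I' n"
      proof
        fix Y assume "Y \<in> \<phi> n ` gr_comp J I n"
        then obtain x where x: "x \<in> ?A n" "Y = \<phi> n (gr_class J I n x)" unfolding gr_comp_Asum by blast
        obtain j where j: "j \<in> ideal_pow J n" "x - j \<in> ?A (Suc n)" using Asum_rep[OF I x(1)] by blast
        have "Y = gr_class J I' n j" using Phi[OF x(1) j] x by simp
        moreover have "j \<in> ?B n" using Asum_pow[OF I'] j by blast
        ultimately show "Y \<in> gr_comp J I' n" unfolding gr_comp_Asum by blast
      qed
      show "gr_comp J I' n \<subseteq> \<phi> n ` gr_comp J I n"
      proof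
        fix Y assume "Y \<in> gr_comp J I' n"
        then obtain y where y: "y \<in> ?B n" "Y = gr_class J I' n y" unfolding gr_comp_Asum by blast
        obtain j where j: "j \<in> ideal_pow J n" "y - j \<in> ?B (Suc n)" using Asum_rep[OF I' y(1)] by blast
        have jA: "j \<in> ?A n" using Asum_pow[OF I] j by blast
        have "\<phi> n (gr_class J I n j) = gr_class J I' n j"
          by (rule Phi[OF jA j(1)]) (simp add: ideal_0[OF Asum_ideal[OF I]])
        also have "\<dots> = Y" using y j cB by blast
        finally show "Y \<in> \<phi> n ` gr_comp J I n" using jA unfolding gr_comp_Asum by blast
      qed
    qed
  qed
  have add: "\<phi> n (gr_class J I n (x + y)) = gr_class J I' n (x' + y')"
    if x: "x \<in> ?A n" and y: "y \<in> ?A n" and x': "x' \<in> ?B n" and y': "y' \<in> ?B n"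
      and hx: "\<phi> n (gr_class J I n x) = gr_class J I' n x'" and hy: "\<phi> n (gr_class J I n y) = gr_class J I' n y'"
    for n x y x' y'
  proof -
    obtain j where j: "j \<in> ideal_pow J n" "x - j \<in> ?A (Suc n)" using Asum_rep[OF I x] by blast
    obtain k where k: "k \<in> ideal_pow J n" "y - k \<in> ?A (Suc n)" using Asum_rep[OF I y] by blast
    have "gr_class J I' n j = gr_class J I' n x'" using hx Phi[OF x j] by simp
    then have xj: "j - x' \<in> ?B (Suc n)" using cB by blast
    have "gr_class J I' n k = gr_class J I' n y'" using hy Phi[OF y k] by simp
    then have yk: "k - y' \<in> ?B (Suc n)" using cB by blast
    have xy: "x + y \<in> ?A n" using ideal_add[OF Asum_ideal[OF I] x y] .
    have jk: "j + k \<in> ideal_pow J n" using ideal_add[OF ideal_pow_ideal j(1) k(1)] .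
    have "(x - j) + (y - k) \<in> ?A (Suc n)" using ideal_add[OF Asum_ideal[OF I] j(2) k(2)] .
    then have "x + y - (j + k) \<in> ?A (Suc n)" by (simp add: algebra_simps)
    then have "\<phi> n (gr_class J I n (x + y)) = gr_class J I' n (j + k)" by (rule Phi[OF xy jk])
    moreover have "(j - x') + (k - y') \<in> ?B (Suc n)" using ideal_add[OF Asum_ideal[OF I'] xj yk] .
    then have "j + k - (x' + y') \<in> ?B (Suc n)" by (simp add: algebra_simps)
    then have "gr_class J I' n (j + k) = gr_class J I' n (x' + y')" using cB by blast
    ultimately show ?thesis by simp
  qed
  have mul: "\<phi> (m + n) (gr_class J I (m + n) (x * y)) = gr_class J I' (m + n) (x' * y')"
    if x: "x \<in> ?A m" and y: "y \<in> ?A n" and x': "x' \<in> ?B m" and y': "y' \<in> ?B n"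
      and hx: "\<phi> m (gr_class J I m x) = gr_class J I' m x'" and hy: "\<phi> n (gr_class J I n y) = gr_class J I' n y'"
    for m n x y x' y'
  proof -
    obtain j where j: "j \<in> ideal_pow J m" "x - j \<in> ?A (Suc m)" using Asum_rep[OF I x] by blast
    obtain k where k: "k \<in> ideal_pow J n" "y - k \<in> ?A (Suc n)" using Asum_rep[OF I y] by blast
    have "gr_class J I' m j = gr_class J I' m x'" using hx Phi[OF x j] by simp
    then have xj: "j - x' \<in> ?B (Suc m)" using cB by blast
    have "gr_class J I' n k = gr_class J I' n y'" using hy Phi[OF y k] by simp
    then have yk: "k - y' \<in> ?B (Suc n)" using cB by blast
    have xy: "x * y \<in> ?A (m + n)" by (rule Asum_mult[OF J I x y])
    have jk: "j * k \<in> ideal_pow J (m + n)" by (rule ideal_pow_mult[OF J j(1) k(1)])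
    have jA: "j \<in> ?A m" using Asum_pow[OF I] j(1) by blast
    have t1: "(x - j) * y \<in> ?A (Suc (m + n))" using Asum_mult[OF J I j(2) y] by simp
    have t2: "j * (y - k) \<in> ?A (Suc (m + n))" using Asum_mult[OF J I jA k(2)] by simp
    have "(x - j) * y + j * (y - k) \<in> ?A (Suc (m + n))" by (rule ideal_add[OF Asum_ideal[OF I] t1 t2])
    then have "x * y - j * k \<in> ?A (Suc (m + n))" by (simp add: algebra_simps)
    then have "\<phi> (m + n) (gr_class J I (m + n) (x * y)) = gr_class J I' (m + n) (j * k)" by (rule Phi[OF xy jk])
    moreover
    have jB: "j \<in> ?B m" using Asum_pow[OF I'] j(1) by blast
    have s1: "(j - x') * y' \<in> ?B (Suc (m + n))" using Asum_mult[OF J I' xj y'] by simp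
    have s2: "j * (k - y') \<in> ?B (Suc (m + n))" using Asum_mult[OF J I' jB yk] by simp
    have "(j - x') * y' + j * (k - y') \<in> ?B (Suc (m + n))" by (rule ideal_add[OF Asum_ideal[OF I'] s1 s2])
    then have "j * k - x' * y' \<in> ?B (Suc (m + n))" by (simp add: algebra_simps)
    then have "gr_class J I' (m + n) (j * k) = gr_class J I' (m + n) (x' * y')" using cB by blast
    ultimately show ?thesis by simp
  qed
  have one: "\<phi> 0 (gr_class J I 0 1) = gr_class J I' 0 1"
  proof (rule Phi)
    show "1 \<in> ?A 0" using Asum_pow[OF I, of J 0] by auto
    show "1 \<in> ideal_pow J 0" by simp
    show "1 - 1 \<in> ?A (Suc 0)" by (simp add: ideal_0[OF Asum_ideal[OF I]])
  qed
  show ?thesis unfolding gr_iso_def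
  proof (intro exI[of _ \<phi>] conjI allI impI)
    show "bij_betw (\<phi> n) (gr_comp J I n) (gr_comp J I' n)" for n by (rule bij)
    show "\<phi> 0 (gr_class J I 0 1) = gr_class J I' 0 1" by (rule one)
  next
    fix n x y x' y'
    assume "x \<in> ideal_sum (ideal_pow J n) I \<and> y \<in> ideal_sum (ideal_pow J n) I \<and>
         x' \<in> ideal_sum (ideal_pow J n) I' \<and> y' \<in> ideal_sum (ideal_pow J n) I' \<and>
         \<phi> n (gr_class J I n x) = gr_class J I' n x' \<and> \<phi> n (gr_class J I n y) = gr_class J I' n y'"
    then show "\<phi> n (gr_class J I n (x + y)) = gr_class J I' n (x' + y')"
      using add unfolding Asum_def by blast
  next
    fix m n x y x' y'
    assume "x \<in> ideal_sum (ideal_pow J m) I \<and> y \<in> ideal_sum (ideal_pow J n) I \<and>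
         x' \<in> ideal_sum (ideal_pow J m) I' \<and> y' \<in> ideal_sum (ideal_pow J n) I' \<and>
         \<phi> m (gr_class J I m x) = gr_class J I' m x' \<and> \<phi> n (gr_class J I n y) = gr_class J I' n y'"
    then show "\<phi> (m + n) (gr_class J I (m + n) (x * y)) = gr_class J I' (m + n) (x' * y')"
      using mul unfolding Asum_def by blast
  qed
qed



lemma length_arg:
  assumes J: "is_ideal J" and I: "is_ideal I" and I': "is_ideal I'"
    and inc: "\<And>n. ideal_pow J n \<inter> Asum J I (Suc n) \<subseteq> Asum J I' (Suc n)"
    and fin: "\<And>n. quot_length (Asum J I n) \<noteq> \<infinity>"
    and eq: "\<And>n. quot_length (Asum J I n) = quot_length (Asum J I' n)"
  shows "ideal_pow J n \<inter> Asum J I' (Suc n) \<subseteq> Asum J I (Suc n)"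
proof (rule ccontr)
  let ?A = "Asum J I" and ?B = "Asum J I'" and ?Jn = "ideal_pow J n"
  assume "\<not> ?thesis"
  then obtain x where x: "x \<in> ?Jn" "x \<in> ?B (Suc n)" "x \<notin> ?A (Suc n)" by blast
  define U where "U = ?Jn \<inter> ?A (Suc n)"
  define U' where "U' = ?Jn \<inter> ?B (Suc n)"
  have Uid: "is_ideal U" unfolding U_def by (rule ideal_Int[OF ideal_pow_ideal Asum_ideal[OF I]])
  have UU': "U \<subset> U'" using inc[of n] x unfolding U_def U'_def by blast
  have finB: "quot_length (?B (Suc n)) \<noteq> \<infinity>" using fin eq by metis
  obtain kb where kb: "chain_len (?B (Suc n)) UNIV kb" "quot_length (?B (Suc n)) = enat kb"
    using quot_length_attained[OF Asum_ideal[OF I'] finB] by blast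
  obtain u v where uv: "kb \<le> u + v" "chain_len (?B (Suc n)) (?B n) u" "chain_len (?B n) UNIV v"
    using chain_modular[OF kb(1) Asum_Suc_sub[OF J] _ Asum_ideal[OF I']] by blast
  have c1: "chain_len (?B (Suc n) \<inter> ?Jn) (?B n \<inter> ?Jn) u"
  proof (rule chain_map[OF uv(2)])
    fix V :: "'a set" assume "is_ideal V" then show "is_ideal (V \<inter> ?Jn)" by (rule ideal_Int[OF _ ideal_pow_ideal])
  next
    fix V W :: "'a set" assume V: "is_ideal V" and W: "is_ideal W" and BV: "?B (Suc n) \<subseteq> V"
      and WB: "W \<subseteq> ?B n" and VW: "V \<subset> W"
    show "V \<inter> ?Jn \<subset> W \<inter> ?Jn"
    proof (rule ccontr)
      assume "\<not> V \<inter> ?Jn \<subset> W \<inter> ?Jn"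
      then have eqVW: "W \<inter> ?Jn \<subseteq> V \<inter> ?Jn" using VW by blast
      obtain w where w: "w \<in> W" "w \<notin> V" using VW by blast
      then have "w \<in> ?B n" using WB by blast
      then obtain j i where ji: "j \<in> ?Jn" "i \<in> I'" "w = j + i" unfolding Asum_def by (rule ideal_sum_memE)
      have "i \<in> V" using ji(2) Asum_I[OF I'] BV by blast
      then have iW: "i \<in> W" using VW by blast
      have "j = w - i" using ji by simp
      then have "j \<in> W" using ideal_diff[OF W w(1) iW] by simp
      then have "j \<in> V" using eqVW ji(1) by blast
      then have "w \<in> V" using ideal_add[OF V _ \<open>i \<in> V\<close>] ji(3) by blast
      then show False using w by blast
    qed
  qed
  have "?B (Suc n) \<inter> ?Jn = U'" unfolding U'_def by blast
  moreover have "?B n \<inter> ?Jn = ?Jn" using Asum_pow[OF I'] by blast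
  ultimately have c1': "chain_len U' ?Jn u" using c1 by simp
  have c2: "chain_len U ?Jn (Suc u)" by (rule chain_cons[OF c1' UU' Uid])
  have c3: "chain_len (ideal_sum U I) (ideal_sum ?Jn I) (Suc u)"
  proof (rule chain_map[OF c2])
    fix V :: "'a set" assume "is_ideal V" then show "is_ideal (ideal_sum V I)" by (rule ideal_sum_ideal[OF _ I])
  next
    fix V W :: "'a set" assume V: "is_ideal V" and W: "is_ideal W" and UV: "U \<subseteq> V"
      and WJ: "W \<subseteq> ?Jn" and VW: "V \<subset> W"
    show "ideal_sum V I \<subset> ideal_sum W I"
    proof (rule ccontr)
      have sub: "ideal_sum V I \<subseteq> ideal_sum W I" using VW by (intro ideal_sum_mono) auto
      assume "\<not> ideal_sum V I \<subset> ideal_sum W I"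
      then have eqVW: "ideal_sum W I \<subseteq> ideal_sum V I" using sub by blast
      obtain w where w: "w \<in> W" "w \<notin> V" using VW by blast
      then have "w \<in> ideal_sum W I" using ideal_sum_left[OF I] by blast
      then have "w \<in> ideal_sum V I" using eqVW by blast
      then obtain v i where vi: "v \<in> V" "i \<in> I" "w = v + i" by (rule ideal_sum_memE)
      have "v \<in> W" using vi VW by blast
      then have "i \<in> W" using ideal_diff[OF W w(1)] vi by (metis add_diff_cancel_left')
      then have "i \<in> ?Jn" using WJ by blast
      moreover have "i \<in> ?A (Suc n)" using Asum_I[OF I] vi(2) by blast
      ultimately have "i \<in> V" using UV unfolding U_def by blast
      then have "w \<in> V" using ideal_add[OF V vi(1)] vi(3) by blast
      then show False using w by blast
    qed
  qed
  have "ideal_sum U I = ?A (Suc n)"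
  proof
    show "ideal_sum U I \<subseteq> ?A (Suc n)"
      by (rule ideal_sum_least[OF Asum_ideal[OF I]]) (auto simp: U_def intro: Asum_I[OF I, THEN subsetD])
    show "?A (Suc n) \<subseteq> ideal_sum U I"
    proof
      fix z assume "z \<in> ?A (Suc n)"
      then obtain j i where ji: "j \<in> ideal_pow J (Suc n)" "i \<in> I" "z = j + i" unfolding Asum_def by (rule ideal_sum_memE)
      have "j \<in> ?Jn" using ji(1) ideal_pow_Suc_sub[OF J] by blast
      moreover have "j \<in> ?A (Suc n)" using ji(1) Asum_pow[OF I] by blast
      ultimately have "j \<in> U" unfolding U_def by blast
      then show "z \<in> ideal_sum U I" using ji ideal_sum_memI by blast
    qed
  qed
  moreover have "ideal_sum ?Jn I = ?A n" unfolding Asum_def ..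
  ultimately have c3': "chain_len (?A (Suc n)) (?A n) (Suc u)" using c3 by simp
  obtain ka where ka: "chain_len (?A n) UNIV ka" "quot_length (?A n) = enat ka"
    using quot_length_attained[OF Asum_ideal[OF I] fin] by blast
  have "enat v \<le> quot_length (?B n)" by (rule quot_length_ge[OF uv(3)])
  then have vka: "v \<le> ka" using ka(2) eq[of n] by simp
  have "chain_len (?A (Suc n)) UNIV (Suc u + ka)" by (rule chain_append[OF c3' ka(1)])
  then have "enat (Suc u + ka) \<le> quot_length (?A (Suc n))" by (rule quot_length_ge)
  then have "Suc u + ka \<le> kb" using kb(2) eq[of "Suc n"] by simp
  then show False using uv(1) vka by simp
qed



theorem proposition4p7:
  fixes m J :: "'a::comm_ring_1 set" and fs :: "'a list" and p :: nat
  assumes "noetherian_ring TYPE('a)"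
    and "local_ring_max m"
    and "is_ideal J" and "m_primary m J"
    and "filter_regular m fs"
    and "hilbert_perturbation_index J fs p"
  shows "\<forall>fs'. perturbation (ideal_pow J (max p (artin_rees_number J (ideal_of_list fs) + 1))) fs fs'
           \<longrightarrow> gr_iso J (ideal_of_list fs) (ideal_of_list fs')"
proof (intro allI impI)
  fix fs' assume pert: "perturbation (ideal_pow J (max p (artin_rees_number J (ideal_of_list fs) + 1))) fs fs'"
  note N = assms(1) and J = assms(3)
  define I where "I = ideal_of_list fs"
  define I' where "I' = ideal_of_list fs'"
  define c where "c = artin_rees_number J I"
  define Nn where "Nn = max p (c + 1)"
  have I: "is_ideal I" unfolding I_def ideal_of_list_def by (rule ideal_gen_ideal)
  have I': "is_ideal I'" unfolding I'_def ideal_of_list_def by (rule ideal_gen_ideal)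
  have pert': "perturbation (ideal_pow J Nn) fs fs'" using pert unfolding Nn_def c_def I_def .
  have AR: "\<forall>n\<ge>c. ideal_pow J n \<inter> I = ideal_prod (ideal_pow J (n - c)) (ideal_pow J c \<inter> I)"
    unfolding c_def artin_rees_number_def by (rule LeastI_ex[OF artin_rees[OF N J I]])
  have mmax: "maximal_ideal m" using assms(2) unfolding local_ring_max_def by blast
  have mid: "is_ideal m" using mmax unfolding maximal_ideal_def by blast
  obtain t where t: "ideal_pow m t \<subseteq> J" using maximal_pow_sub[OF N J assms(4) mid] by blast
  obtain Bm where "bounded_len (ideal_pow m t) UNIV Bm"
    using bounded_pow[OF N mid bounded_maximal[OF mmax]] by blast
  then have "bounded_len J UNIV Bm" using bounded_sub t ideal_pow_ideal by blast
  then have bJ: "\<exists>Bk. bounded_len (ideal_pow J k) UNIV Bk" for k using bounded_pow[OF N J] by blast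
  have fin: "quot_length (Asum J I n) \<noteq> \<infinity>" for n
  proof -
    obtain Bk where "bounded_len (ideal_pow J n) UNIV Bk" using bJ by blast
    then have "bounded_len (Asum J I n) UNIV Bk" using bounded_sub Asum_pow[OF I] ideal_pow_ideal by blast
    then have "quot_length (Asum J I n) \<le> enat Bk" unfolding bounded_len_def by (intro quot_length_le) blast
    then show ?thesis by (cases "quot_length (Asum J I n)") auto
  qed
  have hpi: "hpi_property J fs p" using assms(6) unfolding hilbert_perturbation_index_def by blast
  have "ideal_pow J Nn \<subseteq> ideal_pow J p" using ideal_pow_anti[OF J] unfolding Nn_def by simp
  then have "perturbation (ideal_pow J p) fs fs'" using pert' unfolding perturbation_def by blast
  then have "\<forall>n. quot_length (ideal_sum I (ideal_pow J n)) = quot_length (ideal_sum I' (ideal_pow J n))"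
    using hpi unfolding hpi_property_def I_def I'_def by blast
  then have eq: "quot_length (Asum J I n) = quot_length (Asum J I' n)" for n
    unfolding Asum_def using ideal_sum_comm by metis
  have gen: "u * v \<in> Asum J I' (Suc n)"
    if kn: "Suc n \<le> k + Nn" and u: "u \<in> ideal_pow J k" and v: "v \<in> I" for u v k n
  proof -
    let ?B = "Asum J I' (Suc n)"
    have B: "is_ideal ?B" by (rule Asum_ideal[OF I'])
    define X where "X = {v. \<forall>u\<in>ideal_pow J k. u * v \<in> ?B}"
    have X: "is_ideal X" unfolding X_def
    proof (rule is_idealI)
      show "0 \<in> {v. \<forall>u\<in>ideal_pow J k. u * v \<in> ?B}" using ideal_0[OF B] by simp
      fix x y assume "x \<in> {v. \<forall>u\<in>ideal_pow J k. u * v \<in> ?B}" "y \<in> {v. \<forall>u\<in>ideal_pow J k. u * v \<in> ?B}"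
      then have "\<forall>u\<in>ideal_pow J k. u * x + u * y \<in> ?B" using ideal_add[OF B] by blast
      then show "x + y \<in> {v. \<forall>u\<in>ideal_pow J k. u * v \<in> ?B}"
        by (simp add: distrib_left)
    next
      fix r x assume "x \<in> {v. \<forall>u\<in>ideal_pow J k. u * v \<in> ?B}"
      then have "\<forall>u\<in>ideal_pow J k. r * (u * x) \<in> ?B" using ideal_mult[OF B] by blast
      then show "r * x \<in> {v. \<forall>u\<in>ideal_pow J k. u * v \<in> ?B}"
        by (simp add: mult.left_commute)
    qed
    have "set fs \<subseteq> X"
    proof
      fix f assume "f \<in> set fs"
      then obtain i where i: "i < length fs" "fs ! i = f" by (auto simp: in_set_conv_nth)
      have len: "length fs' = length fs" and d: "fs' ! i - fs ! i \<in> ideal_pow J Nn"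
        using pert' i(1) unfolding perturbation_def by auto
      have f'I': "fs' ! i \<in> I'" unfolding I'_def ideal_of_list_def
        using i(1) len ideal_gen_sub[of "set fs'"] by (metis nth_mem subsetD)
      show "f \<in> X" unfolding X_def
      proof (intro CollectI ballI)
        fix u assume u: "u \<in> ideal_pow J k"
        have "u * (fs' ! i) \<in> I'" by (rule ideal_mult[OF I' f'I'])
        then have t1: "u * (fs' ! i) \<in> ?B" using Asum_I[OF I'] by blast
        have "u * (fs' ! i - fs ! i) \<in> ideal_pow J (k + Nn)" by (rule ideal_pow_mult[OF J u d])
        then have "u * (fs' ! i - fs ! i) \<in> ideal_pow J (Suc n)" using ideal_pow_anti[OF J kn] by blast
        then have t2: "u * (fs' ! i - fs ! i) \<in> ?B" using Asum_pow[OF I'] by blast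
        have "u * (fs' ! i) - u * (fs' ! i - fs ! i) \<in> ?B" by (rule ideal_diff[OF B t1 t2])
        then show "u * f \<in> ?B" using i(2) by (simp add: algebra_simps)
      qed
    qed
    then have "I \<subseteq> X" unfolding I_def ideal_of_list_def by (rule ideal_gen_least[OF X])
    then show ?thesis using v u unfolding X_def by blast
  qed
  have key: "ideal_pow J n \<inter> I \<subseteq> Asum J I' (Suc n)" for n
  proof (cases "c \<le> n")
    case True
    then have "ideal_pow J n \<inter> I = ideal_prod (ideal_pow J (n - c)) (ideal_pow J c \<inter> I)" using AR by blast
    also have "\<dots> \<subseteq> Asum J I' (Suc n)"
    proof (rule ideal_prod_least[OF Asum_ideal[OF I']])
      fix a b assume "a \<in> ideal_pow J (n - c)" "b \<in> ideal_pow J c \<inter> I"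
      then show "a * b \<in> Asum J I' (Suc n)" using gen[of n "n - c" a b] True unfolding Nn_def by auto
    qed
    finally show ?thesis .
  next
    case False
    show ?thesis
    proof
      fix x assume "x \<in> ideal_pow J n \<inter> I"
      then have "1 * x \<in> Asum J I' (Suc n)" using gen[of n 0 1 x] False unfolding Nn_def by auto
      then show "x \<in> Asum J I' (Suc n)" by simp
    qed
  qed
  have inc: "ideal_pow J n \<inter> Asum J I (Suc n) \<subseteq> Asum J I' (Suc n)" for n
  proof
    fix x assume x: "x \<in> ideal_pow J n \<inter> Asum J I (Suc n)"
    then obtain j i where ji: "j \<in> ideal_pow J (Suc n)" "i \<in> I" "x = j + i" unfolding Asum_def
      by (blast elim: ideal_sum_memE)
    have jn: "j \<in> ideal_pow J n" using ji(1) ideal_pow_Suc_sub[OF J] by blast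
    have "i = x - j" using ji by simp
    then have "i \<in> ideal_pow J n" using ideal_diff[OF ideal_pow_ideal _ jn] x by blast
    then have "i \<in> Asum J I' (Suc n)" using key ji(2) by blast
    moreover have "j \<in> Asum J I' (Suc n)" using ji(1) Asum_pow[OF I'] by blast
    ultimately show "x \<in> Asum J I' (Suc n)" using ji(3) ideal_add[OF Asum_ideal[OF I']] by (metis add.commute)
  qed
  have rev: "ideal_pow J n \<inter> Asum J I' (Suc n) \<subseteq> Asum J I (Suc n)" for n
    by (rule length_arg[OF J I I' inc fin eq])
  have "gr_iso J I I'"
  proof (rule gr_iso_crit[OF J I I'])
    fix n j assume "j \<in> ideal_pow J n"
    then show "j \<in> Asum J I (Suc n) \<longleftrightarrow> j \<in> Asum J I' (Suc n)" using inc[of n] rev[of n] by blast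
  qed
  then show "gr_iso J (ideal_of_list fs) (ideal_of_list fs')" unfolding I_def I'_def .
qed


end
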